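(* Let $b\in\mathbb{Z}\setminus\{1,-1\}$ be odd. Then the $D_2$-symmetric curves $g^\varepsilon$ representing the torus knot class $\mathcal{T}(2,b)$, defined in the context, converge strongly in $W^{2,2}(\mathbb{R}/\mathbb{Z},\mathbb{R}^3)$ to the curve $\mathrm{tpc}[\pi]$ as $\varepsilon\to0$.
   Context: $R_1=\mathrm{diag}(1,-1,-1)$, $R_2=\mathrm{diag}(-1,1,-1)$, $R_3=\mathrm{diag}(-1,-1,1)$. For an arc $\alpha:[0,1/4]\to\mathbb{R}^3$ let $G[\alpha]$ be the $1$-periodic curve with $G[\alpha](t)=\alpha(t)$ on $[0,1/4)$, $R_1\alpha(1/2-t)$ on $[1/4,1/2)$, $R_2\alpha(t-1/2)$ on $[1/2,3/4)$, $R_3\alpha(1-t)$ on $[3/4,1)$. Define $\mathrm{tpc}[\pi]=G[\alpha_2]$ with $\alpha_2(t)=\frac1{4\pi}(1-\cos4\pi t,\ \sin4\pi t,\ 0)$ (a planar figure-eight of two tangent circles of radius $1/(4\pi)$). Construction for odd $b\ge3$ and $0<\varepsilon<1/(4(b+1))$: set $\rho=\varepsilon^2$ and $r=(1/4-(b+1)\varepsilon)/\pi>0$. Let $\phi(t)=t$ for $t\in[0,\frac{b-1}2]$, $\phi(t)=\frac b2-\frac12(t-\frac{b+1}2)^2$ for $t\in[\frac{b-1}2,\frac{b+1}2]$, $\phi(t)=\frac b2$ for $t\ge\frac{b+1}2$, and $\phi_\varepsilon(t)=\pi\phi(t/\varepsilon)$. Helical part: $h^\varepsilon(t)=(\rho(-1)^{(b-1)/2}\sin\phi_\varepsilon(t),\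 t,\ \rho\cos\phi_\varepsilon(t))$. Stadium part: for $t\in[\frac{(b+1)\varepsilon}2,\frac14-\frac{(b+1)\varepsilon}2]$, $\sigma^\varepsilon(t)=(\rho+r-r\cos(\frac1r(t-\frac{(b+1)\varepsilon}2)),\ \frac{(b+1)\varepsilon}2+r\sin(\frac1r(t-\frac{(b+1)\varepsilon}2)),\ 0)$; for $t\in[\frac14-\frac{(b+1)\varepsilon}2,\frac14]$, $\sigma^\varepsilon(t)=(\rho+2r,\ \frac14-t,\ 0)$. Let $\alpha^\varepsilon=h^\varepsilon$ on $[0,\frac{(b+1)\varepsilon}2]$ and $\alpha^\varepsilon=\sigma^\varepsilon$ on $(\frac{(b+1)\varepsilon}2,\frac14]$, and $g^\varepsilon=G[\alpha^\varepsilon]$; this is a $C^{1,1}$ closed $D_2$-symmetric curve of knot type $\mathcal{T}(2,b)$. For odd $b\le-3$, let $g^\varepsilon$ be the image under the reflection $(x,y,z)\mapsto(x,y,-z)$ of the curve constructed for $|b|$; it is $D_2$-symmetric and of knot type $\mathcal{T}(2,b)$. *)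

theory Defs
  imports "HOL-Analysis.Analysis"
begin

type_synonym vec3 = "real ^ 3"

definition mk3 :: "real \<Rightarrow> real \<Rightarrow> real \<Rightarrow> vec3" where
  "mk3 x y z = vector [x, y, z]"

definition R1 :: "vec3 \<Rightarrow> vec3" where "R1 v = mk3 (v$1) (- v$2) (- v$3)"
definition R2 :: "vec3 \<Rightarrow> vec3" where "R2 v = mk3 (- v$1) (v$2) (- v$3)"
definition R3 :: "vec3 \<Rightarrow> vec3" where "R3 v = mk3 (- v$1) (- v$2) (v$3)"

definition Gsym :: "(real \<Rightarrow> vec3) \<Rightarrow> real \<Rightarrow> vec3" where
  "Gsym \<alpha> t = (let s = t - of_int \<lfloor>t\<rfloor> in
     if s < 1/4 then \<alpha> s
     else if s < 1/2 then R1 (\<alpha> (1/2 - s))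
     else if s < 3/4 then R2 (\<alpha> (s - 1/2))
     else R3 (\<alpha> (1 - s)))"

definition alpha2 :: "real \<Rightarrow> vec3" where
  "alpha2 t = (1 / (4*pi)) *\<^sub>R mk3 (1 - cos (4*pi*t)) (sin (4*pi*t)) 0"

definition tpc_pi :: "real \<Rightarrow> vec3" where "tpc_pi = Gsym alpha2"

definition phiT :: "int \<Rightarrow> real \<Rightarrow> real" where
  "phiT b t = (if t \<le> (real_of_int b - 1)/2 then t
     else if t \<le> (real_of_int b + 1)/2 then real_of_int b / 2 - (1/2) * (t - (real_of_int b + 1)/2)^2
     else real_of_int b / 2)"

definition phiE :: "int \<Rightarrow> real \<Rightarrow> real \<Rightarrow> real" where
  "phiE b \<epsilon> t = pi * phiT b (t / \<epsilon>)"

definition rhoE :: "real \<Rightarrow> real" where "rhoE \<epsilon> = \<epsilon>^2"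

definition rE :: "int \<Rightarrow> real \<Rightarrow> real" where
  "rE b \<epsilon> = (1/4 - (real_of_int b + 1) * \<epsilon>) / pi"

definition helE :: "int \<Rightarrow> real \<Rightarrow> real \<Rightarrow> vec3" where
  "helE b \<epsilon> t = mk3 (rhoE \<epsilon> * (-1) ^ nat ((b - 1) div 2) * sin (phiE b \<epsilon> t))
                     t (rhoE \<epsilon> * cos (phiE b \<epsilon> t))"

definition stadE :: "int \<Rightarrow> real \<Rightarrow> real \<Rightarrow> vec3" where
  "stadE b \<epsilon> t = (let r = rE b \<epsilon>; c = (real_of_int b + 1) * \<epsilon> / 2 in
     if t \<le> 1/4 - c then
       mk3 (rhoE \<epsilon> + r - r * cos ((t - c) / r)) (c + r * sin ((t - c) / r)) 0
     else mk3 (rhoE \<epsilon> + 2*r) (1/4 - t) 0)"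

definition alphaE :: "int \<Rightarrow> real \<Rightarrow> real \<Rightarrow> vec3" where
  "alphaE b \<epsilon> t = (if t \<le> (real_of_int b + 1) * \<epsilon> / 2 then helE b \<epsilon> t else stadE b \<epsilon> t)"

definition reflz :: "vec3 \<Rightarrow> vec3" where "reflz v = mk3 (v$1) (v$2) (- v$3)"

text \<open>g^epsilon for odd b with |b| \<ge> 3 (meaningful for 0 < epsilon < 1/(4(|b|+1))).\<close>
definition gE :: "int \<Rightarrow> real \<Rightarrow> real \<Rightarrow> vec3" where
  "gE b \<epsilon> = (if b \<ge> 0 then Gsym (alphaE b \<epsilon>)
              else (\<lambda>t. reflz (Gsym (alphaE (- b) \<epsilon>) t)))"

text \<open>Sobolev space W^{2,2}(R/Z,R^3) via weak derivatives of 1-periodic functions,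
  tested against smooth 1-periodic real test functions.\<close>
definition smooth_periodic_test :: "(real \<Rightarrow> real) \<Rightarrow> bool" where
  "smooth_periodic_test \<phi> \<longleftrightarrow> (\<forall>k x. (deriv ^^ k) \<phi> differentiable at x) \<and> (\<forall>t. \<phi> (t + 1) = \<phi> t)"

definition periodic1 :: "(real \<Rightarrow> vec3) \<Rightarrow> bool" where
  "periodic1 f \<longleftrightarrow> (\<forall>t. f (t + 1) = f t)"

definition weak_deriv :: "(real \<Rightarrow> vec3) \<Rightarrow> (real \<Rightarrow> vec3) \<Rightarrow> bool" where
  "weak_deriv f h \<longleftrightarrow> set_integrable lborel {0..1} f \<and> set_integrable lborel {0..1} h \<and>
     (\<forall>\<phi>. smooth_periodic_test \<phi> \<longrightarrow>
        (LINT t:{0..1}|lborel. deriv \<phi> t *\<^sub>R f t) = - (LINT t:{0..1}|lborel. \<phi> t *\<^sub>R h t))"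

definition L2_on01 :: "(real \<Rightarrow> vec3) \<Rightarrow> bool" where
  "L2_on01 f \<longleftrightarrow> f \<in> borel_measurable lborel \<and> set_integrable lborel {0..1} (\<lambda>t. (norm (f t))^2)"

definition sqnorm01 :: "(real \<Rightarrow> vec3) \<Rightarrow> real" where
  "sqnorm01 f = (LINT t:{0..1}|lborel. (norm (f t))^2)"

definition W22 :: "(real \<Rightarrow> vec3) \<Rightarrow> (real \<Rightarrow> vec3) \<Rightarrow> (real \<Rightarrow> vec3) \<Rightarrow> bool" where
  "W22 f f1 f2 \<longleftrightarrow> periodic1 f \<and> periodic1 f1 \<and> periodic1 f2 \<and>
     L2_on01 f \<and> L2_on01 f1 \<and> L2_on01 f2 \<and> weak_deriv f f1 \<and> weak_deriv f1 f2"

end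

theory Submission
  imports Defs
begin

lemma mk3_nth[simp]: "mk3 x y z $ 1 = x" "mk3 x y z $ 2 = y" "mk3 x y z $ 3 = z"
  by (simp_all add: mk3_def)

lemma vec3_eq_iff: "(u::vec3) = v \<longleftrightarrow> u$1 = v$1 \<and> u$2 = v$2 \<and> u$3 = v$3"
  by (simp add: vec_eq_iff forall_3)

lemma mk3_eta: "mk3 (v$1) (v$2) (v$3) = v"
  by (simp add: vec3_eq_iff)

lemma mk3_decomp: "mk3 x y z = x *\<^sub>R mk3 1 0 0 + y *\<^sub>R mk3 0 1 0 + z *\<^sub>R mk3 0 0 1"
  by (simp add: vec3_eq_iff)

lemma mk3_add: "mk3 a b c + mk3 x y z = mk3 (a+x) (b+y) (c+z)"
  and mk3_diff: "mk3 a b c - mk3 x y z = mk3 (a-x) (b-y) (c-z)"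
  and mk3_scaleR: "r *\<^sub>R mk3 x y z = mk3 (r*x) (r*y) (r*z)"
  and mk3_uminus: "- mk3 x y z = mk3 (-x) (-y) (-z)"
  and mk3_zero: "0 = mk3 0 0 0"
  by (simp_all add: vec3_eq_iff)

lemma norm_vec3_sq: "(norm (v::vec3))^2 = (v$1)^2 + (v$2)^2 + (v$3)^2"
  by (simp add: norm_vec_def L2_set_def sum_3)

lemma norm_mk3_sq: "(norm (mk3 x y z))^2 = x^2 + y^2 + z^2"
  by (simp add: norm_vec3_sq)

lemma norm_mk3_le: "norm (mk3 x y z) \<le> \<bar>x\<bar> + \<bar>y\<bar> + \<bar>z\<bar>"
proof -
  have "norm (mk3 x y z) \<le> norm (x *\<^sub>R mk3 1 0 0) + norm (y *\<^sub>R mk3 0 1 0) + norm (z *\<^sub>R mk3 0 0 1)"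
    by (subst mk3_decomp) (meson norm_triangle_le order_refl add_mono)
  moreover have "norm (mk3 1 0 (0::real)) = 1" "norm (mk3 0 1 (0::real)) = 1" "norm (mk3 0 0 (1::real)) = 1"
    by (simp_all add: norm_eq_sqrt_inner inner_vec_def sum_3 mk3_def)
  ultimately show ?thesis by simp
qed

lemma mk3_vd:
  assumes "(f has_real_derivative f') F" "(g has_real_derivative g') F" "(h has_real_derivative h') F"
  shows "((\<lambda>t. mk3 (f t) (g t) (h t)) has_vector_derivative mk3 f' g' h') F"
proof -
  have "((\<lambda>t. f t *\<^sub>R mk3 1 0 0 + g t *\<^sub>R mk3 0 1 0 + h t *\<^sub>R mk3 0 0 1) has_vector_derivative
     (f' *\<^sub>R mk3 1 0 0 + g' *\<^sub>R mk3 0 1 0 + h' *\<^sub>R mk3 0 0 1)) F"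
    using assms unfolding has_real_derivative_iff_has_vector_derivative
    by (intro derivative_intros bounded_linear.has_vector_derivative[OF bounded_linear_scaleR_left])
  then show ?thesis by (simp only: mk3_decomp[symmetric])
qed

lemma mk3_cont[continuous_intros]:
  assumes "continuous_on S f" "continuous_on S g" "continuous_on S h"
  shows "continuous_on S (\<lambda>t. mk3 (f t) (g t) (h t))"
  by (subst mk3_decomp) (intro continuous_intros assms)

lemma mk3_tendsto[tendsto_intros]:
  assumes "(f \<longlongrightarrow> a) F" "(g \<longlongrightarrow> b) F" "(h \<longlongrightarrow> c) F"
  shows "((\<lambda>t. mk3 (f t) (g t) (h t)) \<longlongrightarrow> mk3 a b c) F"
  by (subst (1 2) mk3_decomp) (intro tendsto_intros assms)

lemma mk3_meas[measurable]:
  assumes "f \<in> borel_measurable M" "g \<in> borel_measurable M" "h \<in> borel_measurable M"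
  shows "(\<lambda>t. mk3 (f t) (g t) (h t)) \<in> borel_measurable M"
  by (subst mk3_decomp) (intro borel_measurable_add borel_measurable_scaleR assms borel_measurable_const)

lemma R_simps[simp]: "R1 (mk3 x y z) = mk3 x (-y) (-z)" "R2 (mk3 x y z) = mk3 (-x) y (-z)"
  "R3 (mk3 x y z) = mk3 (-x) (-y) z" "reflz (mk3 x y z) = mk3 x y (-z)"
  by (simp_all add: R1_def R2_def R3_def reflz_def)

lemma R_nth[simp]: "R1 v $ 1 = v$1" "R1 v $ 2 = - v$2" "R1 v $ 3 = - v$3"
  "R2 v $ 1 = - v$1" "R2 v $ 2 = v$2" "R2 v $ 3 = - v$3"
  "R3 v $ 1 = - v$1" "R3 v $ 2 = - v$2" "R3 v $ 3 = v$3"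
  "reflz v $ 1 = v$1" "reflz v $ 2 = v$2" "reflz v $ 3 = - v$3"
  by (simp_all add: R1_def R2_def R3_def reflz_def)

lemma R_linear: "bounded_linear R1" "bounded_linear R2" "bounded_linear R3" "bounded_linear reflz"
  by (auto simp: linear_conv_bounded_linear[symmetric] intro!: linearI simp: vec3_eq_iff)

lemma R_norm[simp]: "norm (R1 v) = norm v" "norm (R2 v) = norm v" "norm (R3 v) = norm v"
  "norm (reflz v) = norm v"
  by (simp_all add: norm_eq_sqrt_inner inner_vec_def sum_3)

lemma lin_vd:
  assumes "bounded_linear L" "(g has_vector_derivative g') F"
  shows "((\<lambda>x. L (g x)) has_vector_derivative L g') F"
  by (rule bounded_linear.has_vector_derivative[OF assms])


lemma set_int_bounded:
  fixes f :: "real \<Rightarrow> 'b::{banach,second_countable_topology}"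
  assumes "f \<in> borel_measurable borel" "\<And>t. t \<in> {0..1} \<Longrightarrow> norm (f t) \<le> K"
  shows "set_integrable lborel {0..1} f"
  unfolding set_integrable_def
  by (rule integrableI_bounded_set_indicator[where B=K]) (use assms in \<open>auto intro!: AE_I2\<close>)

lemma dom_conv_at_right0:
  fixes s :: "real \<Rightarrow> 'a \<Rightarrow> real"
  assumes meas: "\<forall>\<^sub>F e in at_right 0. s e \<in> borel_measurable M" and w: "integrable M w"
    and lim: "AE x in M. ((\<lambda>e. s e x) \<longlongrightarrow> 0) (at_right 0)"
    and bnd: "\<forall>\<^sub>F e in at_right 0. AE x in M. norm (s e x) \<le> w x"
  shows "((\<lambda>e. integral\<^sup>L M (s e)) \<longlongrightarrow> 0) (at_right 0)"
proof -
  from eventually_conj[OF meas bnd] obtain b where b: "b > 0"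
    and hb: "\<And>e. 0 < e \<Longrightarrow> e < b \<Longrightarrow> s e \<in> borel_measurable M \<and> (AE x in M. norm (s e x) \<le> w x)"
    unfolding eventually_at_right_field by auto
  show ?thesis
  proof (rule tendsto_at_right_sequentially[OF b])
    fix S :: "nat \<Rightarrow> real"
    assume S: "\<And>n. 0 < S n" "\<And>n. S n < b" "decseq S" "S \<longlonglongrightarrow> 0"
    have fl: "filterlim S (at_right 0) sequentially"
      by (rule tendsto_imp_filterlim_at_right[OF S(4)]) (use S(1) in auto)
    have "(\<lambda>n. integral\<^sup>L M (s (S n))) \<longlonglongrightarrow> integral\<^sup>L M (\<lambda>x. 0)"
    proof (rule integral_dominated_convergence[where w=w])
      show "AE x in M. (\<lambda>i. s (S i) x) \<longlonglongrightarrow> 0"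
        using lim by eventually_elim (rule filterlim_compose[OF _ fl])
    qed (use hb S w in auto)
    then show "(\<lambda>n. integral\<^sup>L M (s (S n))) \<longlonglongrightarrow> 0" by simp
  qed
qed

definition Gs :: "real \<Rightarrow> (real \<Rightarrow> vec3) \<Rightarrow> real \<Rightarrow> vec3" where
  "Gs sg \<alpha> t = (let s = t - of_int \<lfloor>t\<rfloor> in
     if s < 1/4 then \<alpha> s
     else if s < 1/2 then sg *\<^sub>R R1 (\<alpha> (1/2 - s))
     else if s < 3/4 then R2 (\<alpha> (s - 1/2))
     else sg *\<^sub>R R3 (\<alpha> (1 - s)))"

lemma Gsym_Gs: "Gsym \<alpha> = Gs 1 \<alpha>"
  by (auto simp: Gsym_def Gs_def fun_eq_iff Let_def)

lemma Gs_periodic: "periodic1 (Gs sg \<alpha>)"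
  unfolding periodic1_def Gs_def by simp

lemma Gs_01: "t \<in> {0..<1} \<Longrightarrow> Gs sg \<alpha> t = (if t < 1/4 then \<alpha> t
     else if t < 1/2 then sg *\<^sub>R R1 (\<alpha> (1/2 - t))
     else if t < 3/4 then R2 (\<alpha> (t - 1/2))
     else sg *\<^sub>R R3 (\<alpha> (1 - t)))"
proof -
  assume "t \<in> {0..<1}"
  then have "\<lfloor>t\<rfloor> = 0" by (simp add: floor_eq_iff)
  then show ?thesis by (simp add: Gs_def)
qed

lemma Gs_1: "Gs sg \<alpha> 1 = \<alpha> 0"
  by (simp add: Gs_def)

lemma R_meas[measurable]: "R1 \<in> borel_measurable borel" "R2 \<in> borel_measurable borel"
  "R3 \<in> borel_measurable borel" "reflz \<in> borel_measurable borel"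
  using R_linear by (auto intro!: borel_measurable_continuous_onI linear_continuous_on)

lemma Gs_meas:
  assumes [measurable]: "\<alpha> \<in> borel_measurable borel"
  shows "Gs sg \<alpha> \<in> borel_measurable borel"
proof -
  define H where "H s = (if s < 1/4 then \<alpha> s
     else if s < 1/2 then sg *\<^sub>R R1 (\<alpha> (1/2 - s))
     else if s < 3/4 then R2 (\<alpha> (s - 1/2))
     else sg *\<^sub>R R3 (\<alpha> (1 - s)))" for s
  have [measurable]: "H \<in> borel_measurable borel" unfolding H_def by measurable
  have [measurable]: "(\<lambda>t::real. t - real_of_int \<lfloor>t\<rfloor>) \<in> borel_measurable borel"
    using borel_measurable_real_floor by measurable
  have "Gs sg \<alpha> = (\<lambda>t. H (t - real_of_int \<lfloor>t\<rfloor>))"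
    by (simp add: fun_eq_iff Gs_def H_def Let_def)
  then show ?thesis by simp
qed

lemma Gs_bound:
  assumes "\<And>u. u \<in> {0..1/4} \<Longrightarrow> norm (\<alpha> u) \<le> K" "\<bar>sg\<bar> = 1"
  shows "norm (Gs sg \<alpha> t) \<le> K"
proof -
  define s where "s = t - of_int \<lfloor>t\<rfloor>"
  have s: "0 \<le> s" "s < 1" unfolding s_def by linarith+
  have "Gs sg \<alpha> t = Gs sg \<alpha> s" unfolding s_def Gs_def by simp
  also have "norm \<dots> \<le> K" using s assms by (auto simp: Gs_01)
  finally show ?thesis .
qed

lemma Gs_cont:
  assumes c: "continuous_on UNIV \<alpha>"
    and M1: "sg *\<^sub>R R1 (\<alpha> (1/4)) = \<alpha> (1/4)" and M2: "R2 (\<alpha> 0) = sg *\<^sub>R R1 (\<alpha> 0)"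
    and M3: "sg *\<^sub>R R3 (\<alpha> (1/4)) = R2 (\<alpha> (1/4))" and M4: "sg *\<^sub>R R3 (\<alpha> 0) = \<alpha> 0"
  shows "continuous_on {0..1} (Gs sg \<alpha>)"
proof -
  have cR: "continuous_on UNIV R1" "continuous_on UNIV R2" "continuous_on UNIV R3"
    using R_linear by (auto intro: linear_continuous_on)
  have ca: "continuous_on S \<alpha>" for S using c by (rule continuous_on_subset) auto
  have c1: "continuous_on {0..1/4} (Gs sg \<alpha>)"
  proof (rule continuous_on_eq[OF ca])
    fix t :: real assume "t \<in> {0..1/4}"
    then consider "t = 1/4" | "0 \<le> t" "t < 1/4" by fastforce
    moreover have e: "\<alpha> (1/4) = Gs sg \<alpha> (1/4)" by (simp add: Gs_01 M1)
    ultimately show "\<alpha> t = Gs sg \<alpha> t" by cases (metis e, simp add: Gs_01)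
  qed
  have c2: "continuous_on {1/4..1/2} (Gs sg \<alpha>)"
  proof (rule continuous_on_eq[where f="\<lambda>t. sg *\<^sub>R R1 (\<alpha> (1/2 - t))"])
    fix t :: real assume "t \<in> {1/4..1/2}"
    then consider "t = 1/2" | "1/4 \<le> t" "t < 1/2" by fastforce
    moreover have e: "sg *\<^sub>R R1 (\<alpha> (1/2 - 1/2)) = Gs sg \<alpha> (1/2)" by (simp add: Gs_01 M2)
    ultimately show "sg *\<^sub>R R1 (\<alpha> (1/2 - t)) = Gs sg \<alpha> t" by cases (metis e, simp add: Gs_01)
  qed (auto intro!: continuous_intros continuous_on_compose2[OF cR(1)] continuous_on_compose2[OF c])
  have c3: "continuous_on {1/2..3/4} (Gs sg \<alpha>)"
  proof (rule continuous_on_eq[where f="\<lambda>t. R2 (\<alpha> (t - 1/2))"])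
    fix t :: real assume "t \<in> {1/2..3/4}"
    then consider "t = 3/4" | "1/2 \<le> t" "t < 3/4" by fastforce
    moreover have e: "R2 (\<alpha> (3/4 - 1/2)) = Gs sg \<alpha> (3/4)" by (simp add: Gs_01 M3)
    ultimately show "R2 (\<alpha> (t - 1/2)) = Gs sg \<alpha> t" by cases (metis e, simp add: Gs_01)
  qed (auto intro!: continuous_intros continuous_on_compose2[OF cR(2)] continuous_on_compose2[OF c])
  have c4: "continuous_on {3/4..1} (Gs sg \<alpha>)"
  proof (rule continuous_on_eq[where f="\<lambda>t. sg *\<^sub>R R3 (\<alpha> (1 - t))"])
    fix t :: real assume "t \<in> {3/4..1}"
    then consider "t = 1" | "3/4 \<le> t" "t < 1" by fastforce
    moreover have e: "sg *\<^sub>R R3 (\<alpha> (1 - 1)) = Gs sg \<alpha> 1" by (simp add: Gs_01 Gs_1 M4)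
    ultimately show "sg *\<^sub>R R3 (\<alpha> (1 - t)) = Gs sg \<alpha> t" by cases (metis e, simp add: Gs_01)
  qed (auto intro!: continuous_intros continuous_on_compose2[OF cR(3)] continuous_on_compose2[OF c])
  have "{0..1::real} = ({0..1/4} \<union> {1/4..1/2}) \<union> ({1/2..3/4} \<union> {3/4..1})" by auto
  then show ?thesis
    using c1 c2 c3 c4 by (metis closed_atLeastAtMost closed_Un continuous_on_closed_Un)
qed

lemma vd_refl_comp:
  assumes "(\<alpha> has_vector_derivative a) (at (c - t))"
  shows "((\<lambda>y. \<alpha> (c - y)) has_vector_derivative - a) (at t)"
proof -
  have "((\<lambda>y. c - y) has_vector_derivative -1) (at t)"
    unfolding has_real_derivative_iff_has_vector_derivative[symmetric]
    by (auto intro!: derivative_eq_intros)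
  from vector_diff_chain_at[OF this] assms show ?thesis by (simp add: o_def)
qed

lemma vd_shift_comp:
  assumes "(\<alpha> has_vector_derivative a) (at (t - c))"
  shows "((\<lambda>y. \<alpha> (y - c)) has_vector_derivative a) (at t)"
proof -
  have "((\<lambda>y. y - c) has_vector_derivative 1) (at t)"
    unfolding has_real_derivative_iff_has_vector_derivative[symmetric]
    by (auto intro!: derivative_eq_intros)
  from vector_diff_chain_at[OF this] assms show ?thesis by (simp add: o_def)
qed

definition ExS :: "real set \<Rightarrow> real set" where
  "ExS S = {1/4,1/2,3/4} \<union> S \<union> (\<lambda>u. 1/2 - u) ` S \<union> (\<lambda>u. u + 1/2) ` S \<union> (\<lambda>u. 1 - u) ` S"

lemma finite_ExS: "finite S \<Longrightarrow> finite (ExS S)"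
  by (simp add: ExS_def)

lemma R_scaleR[simp]: "R1 (c *\<^sub>R v) = c *\<^sub>R R1 v" "R2 (c *\<^sub>R v) = c *\<^sub>R R2 v" "R3 (c *\<^sub>R v) = c *\<^sub>R R3 v"
  "reflz (c *\<^sub>R v) = c *\<^sub>R reflz v"
  by (simp_all add: vec3_eq_iff)

lemma R_uminus[simp]: "R1 (- v) = - R1 v" "R2 (- v) = - R2 v" "R3 (- v) = - R3 v" "reflz (- v) = - reflz v"
  by (simp_all add: vec3_eq_iff)

lemma Gs_deriv:
  assumes t: "t \<in> {0<..<1} - ExS S"
    and d: "\<And>u. u \<in> {0<..<1/4} - S \<Longrightarrow> (\<alpha> has_vector_derivative \<alpha>1 u) (at u)"
  shows "(Gs sg \<alpha> has_vector_derivative Gs (-sg) \<alpha>1 t) (at t)"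
proof -
  have L1: "bounded_linear (\<lambda>v. sg *\<^sub>R R1 v)" "bounded_linear (\<lambda>v. sg *\<^sub>R R3 v)"
    using R_linear by (auto intro: bounded_linear_compose[OF bounded_linear_scaleR_right])
  consider "t < 1/4" | "1/4 < t" "t < 1/2" | "1/2 < t" "t < 3/4" | "3/4 < t"
    using t by (force simp: ExS_def)
  then show ?thesis
  proof cases
    case 1
    have "t \<notin> S" using t by (auto simp: ExS_def)
    then have D: "(\<alpha> has_vector_derivative \<alpha>1 t) (at t)" using t 1 by (intro d) auto
    have E: "Gs (-sg) \<alpha>1 t = \<alpha>1 t" using t 1 by (simp add: Gs_01)
    show ?thesis
      unfolding E by (rule has_vector_derivative_transform_within_open[OF D, where S="{0<..<1/4}"])
         (use t 1 in \<open>auto simp: Gs_01\<close>)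
  next
    case 2
    have "1/2 - t \<notin> S" using t by (force simp: ExS_def)
    then have "(\<alpha> has_vector_derivative \<alpha>1 (1/2 - t)) (at (1/2 - t))" using 2 by (intro d) auto
    note D = lin_vd[OF L1(1) vd_refl_comp[OF this]]
    have E: "Gs (-sg) \<alpha>1 t = sg *\<^sub>R R1 (- \<alpha>1 (1/2 - t))" using t 2 by (simp add: Gs_01)
    show ?thesis
      unfolding E by (rule has_vector_derivative_transform_within_open[OF D, where S="{1/4<..<1/2}"])
         (use t 2 in \<open>auto simp: Gs_01\<close>)
  next
    case 3
    have "t - 1/2 \<notin> S" using t by (force simp: ExS_def)
    then have "(\<alpha> has_vector_derivative \<alpha>1 (t - 1/2)) (at (t - 1/2))" using 3 by (intro d) auto
    note D = lin_vd[OF R_linear(2) vd_shift_comp[OF this]]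
    have E: "Gs (-sg) \<alpha>1 t = R2 (\<alpha>1 (t - 1/2))" using t 3 by (simp add: Gs_01)
    show ?thesis
      unfolding E by (rule has_vector_derivative_transform_within_open[OF D, where S="{1/2<..<3/4}"])
         (use t 3 in \<open>auto simp: Gs_01\<close>)
  next
    case 4
    have "1 - t \<notin> S" using t by (force simp: ExS_def)
    then have "(\<alpha> has_vector_derivative \<alpha>1 (1 - t)) (at (1 - t))" using 4 t by (intro d) auto
    note D = lin_vd[OF L1(2) vd_refl_comp[OF this]]
    have E: "Gs (-sg) \<alpha>1 t = sg *\<^sub>R R3 (- \<alpha>1 (1 - t))" using t 4 by (simp add: Gs_01)
    show ?thesis
      unfolding E by (rule has_vector_derivative_transform_within_open[OF D, where S="{3/4<..<1}"])
         (use t 4 in \<open>auto simp: Gs_01\<close>)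
  qed
qed


lemma meas_lborel: "f \<in> borel_measurable borel \<Longrightarrow> f \<in> borel_measurable lborel"
  by simp

lemma cont_bounded01:
  fixes f :: "real \<Rightarrow> 'b::real_normed_vector"
  assumes "continuous_on {0..1} f"
  obtains B where "\<And>t. t \<in> {0..1} \<Longrightarrow> norm (f t) \<le> B"
proof -
  have "bounded (f ` {0..1})"
    by (intro compact_imp_bounded compact_continuous_image assms) auto
  then obtain B where B: "\<forall>x\<in>f ` {0..1}. norm x \<le> B" by (auto simp: bounded_iff)
  show ?thesis by (rule that[of B]) (use B in blast)
qed

lemma weak_deriv_intro:
  assumes per: "periodic1 f" and cf: "continuous_on {0..1} f"
    and mf: "f \<in> borel_measurable borel" and mg: "g \<in> borel_measurable borel"
    and bf: "\<And>t. t \<in> {0..1} \<Longrightarrow> norm (f t) \<le> K" and bg: "\<And>t. t \<in> {0..1} \<Longrightarrow> norm (g t) \<le> K"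
    and E: "finite E" and d: "\<And>t. t \<in> {0<..<1} - E \<Longrightarrow> (f has_vector_derivative g t) (at t)"
  shows "weak_deriv f g"
  unfolding weak_deriv_def
proof (intro conjI allI impI)
  show "set_integrable lborel {0..1} f" by (rule set_int_bounded[OF mf bf])
  show "set_integrable lborel {0..1} g" by (rule set_int_bounded[OF mg bg])
  fix \<phi> assume sp: "smooth_periodic_test \<phi>"
  have dif0: "\<phi> differentiable at x" for x using sp unfolding smooth_periodic_test_def
    by (metis funpow_0)
  have dif1: "deriv \<phi> differentiable at x" for x
  proof -
    have "(deriv ^^ Suc 0) \<phi> differentiable at x" using sp unfolding smooth_periodic_test_def by blast
    then show ?thesis by simp
  qed
  have dphi: "(\<phi> has_real_derivative deriv \<phi> x) (at x)" for x
    using dif0 DERIV_deriv_iff_real_differentiable by blast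
  have cphi: "continuous_on UNIV \<phi>"
    using dif0 by (meson continuous_at_imp_continuous_on differentiable_imp_continuous_within)
  have cdphi: "continuous_on UNIV (deriv \<phi>)"
    using dif1 by (meson continuous_at_imp_continuous_on differentiable_imp_continuous_within)
  have cphi01: "continuous_on {0..1} \<phi>" "continuous_on {0..1} (deriv \<phi>)"
    using cphi cdphi by (auto intro: continuous_on_subset)
  obtain B1 where B1: "\<And>t. t \<in> {0..1} \<Longrightarrow> norm (\<phi> t) \<le> B1" using cont_bounded01[OF cphi01(1)] by blast
  obtain B2 where B2: "\<And>t. t \<in> {0..1} \<Longrightarrow> norm (deriv \<phi> t) \<le> B2" using cont_bounded01[OF cphi01(2)] by blast
  have mphi[measurable]: "\<phi> \<in> borel_measurable borel" "deriv \<phi> \<in> borel_measurable borel"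
    using cphi cdphi by (auto intro: borel_measurable_continuous_onI)
  note [measurable] = mf mg
  have "norm (deriv \<phi> t *\<^sub>R f t) \<le> B2 * K" if "t \<in> {0..1}" for t
    unfolding norm_scaleR using B2[OF that] bf[OF that]
    by (intro mult_mono) (auto intro: order_trans[OF norm_ge_zero])
  then have i1: "set_integrable lborel {0..1} (\<lambda>t. deriv \<phi> t *\<^sub>R f t)"
    by (intro set_int_bounded[where K="B2*K"]) auto
  have "norm (\<phi> t *\<^sub>R g t) \<le> B1 * K" if "t \<in> {0..1}" for t
    unfolding norm_scaleR using B1[OF that] bg[OF that]
    by (intro mult_mono) (auto intro: order_trans[OF norm_ge_zero])
  then have i2: "set_integrable lborel {0..1} (\<lambda>t. \<phi> t *\<^sub>R g t)"
    by (intro set_int_bounded[where K="B1*K"]) auto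
  have h2: "((\<lambda>t. \<phi> t *\<^sub>R g t) has_integral integral {0..1} (\<lambda>t. \<phi> t *\<^sub>R g t)) {0..1}"
    using set_borel_integral_eq_integral(1)[OF i2] by (simp add: integrable_integral)
  have p: "\<phi> 1 *\<^sub>R f 1 = \<phi> 0 *\<^sub>R f 0"
    using sp per unfolding smooth_periodic_test_def periodic1_def by (metis add_0)
  have "((\<lambda>t. deriv \<phi> t *\<^sub>R f t) has_integral (- integral {0..1} (\<lambda>t. \<phi> t *\<^sub>R g t))) {0..1}"
  proof (rule integration_by_parts_interior_strong[OF bounded_bilinear_scaleR E, of 0 1])
    show "continuous_on {0..1} \<phi>" by (rule cphi01(1))
    show "continuous_on {0..1} f" by (rule cf)
    show "(\<phi> has_vector_derivative deriv \<phi> x) (at x)" for x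
      using dphi[of x] by (simp add: has_real_derivative_iff_has_vector_derivative)
    show "(f has_vector_derivative g x) (at x)" if "x \<in> {0<..<1} - E" for x using d that by blast
    show "((\<lambda>x. \<phi> x *\<^sub>R g x) has_integral
      \<phi> 1 *\<^sub>R f 1 - \<phi> 0 *\<^sub>R f 0 - - integral {0..1} (\<lambda>t. \<phi> t *\<^sub>R g t)) {0..1}"
      using h2 p by simp
  qed auto
  then have "integral {0..1} (\<lambda>t. deriv \<phi> t *\<^sub>R f t) = - integral {0..1} (\<lambda>t. \<phi> t *\<^sub>R g t)"
    by (rule integral_unique)
  then show "(LINT t:{0..1}|lborel. deriv \<phi> t *\<^sub>R f t) = - (LINT t:{0..1}|lborel. \<phi> t *\<^sub>R g t)"
    using set_borel_integral_eq_integral(2)[OF i1] set_borel_integral_eq_integral(2)[OF i2] by simp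
qed

lemma L2_intro:
  assumes m: "f \<in> borel_measurable borel" and b: "\<And>t. t \<in> {0..1} \<Longrightarrow> norm (f t) \<le> K"
  shows "L2_on01 f"
  unfolding L2_on01_def
proof
  show "f \<in> borel_measurable lborel" using m by simp
  show "set_integrable lborel {0..1} (\<lambda>t. (norm (f t))\<^sup>2)"
    by (rule set_int_bounded[where K="K^2"]) (use m b in \<open>auto intro!: power_mono\<close>)
qed

lemma W22_Gs:
  assumes ca: "continuous_on UNIV \<alpha>" and ca1: "continuous_on UNIV \<alpha>1"
    and ma2: "\<alpha>2 \<in> borel_measurable borel"
    and bnd: "\<And>u. u \<in> {0..1/4} \<Longrightarrow> norm (\<alpha> u) \<le> K \<and> norm (\<alpha>1 u) \<le> K \<and> norm (\<alpha>2 u) \<le> K"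
    and S: "finite S"
    and d: "\<And>u. u \<in> {0<..<1/4} - S \<Longrightarrow>
        (\<alpha> has_vector_derivative \<alpha>1 u) (at u) \<and> (\<alpha>1 has_vector_derivative \<alpha>2 u) (at u)"
    and M1: "R1 (\<alpha> (1/4)) = \<alpha> (1/4)" and M2: "R2 (\<alpha> 0) = R1 (\<alpha> 0)"
    and M3: "R3 (\<alpha> (1/4)) = R2 (\<alpha> (1/4))" and M4: "R3 (\<alpha> 0) = \<alpha> 0"
    and N1: "- R1 (\<alpha>1 (1/4)) = \<alpha>1 (1/4)" and N2: "R2 (\<alpha>1 0) = - R1 (\<alpha>1 0)"
    and N3: "- R3 (\<alpha>1 (1/4)) = R2 (\<alpha>1 (1/4))" and N4: "- R3 (\<alpha>1 0) = \<alpha>1 0"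
  shows "W22 (Gs 1 \<alpha>) (Gs (-1) \<alpha>1) (Gs 1 \<alpha>2)"
proof -
  have m: "Gs 1 \<alpha> \<in> borel_measurable borel" "Gs (-1) \<alpha>1 \<in> borel_measurable borel"
    "Gs 1 \<alpha>2 \<in> borel_measurable borel"
    using borel_measurable_continuous_onI[OF ca] borel_measurable_continuous_onI[OF ca1] ma2
    by (auto intro!: Gs_meas)
  have b: "norm (Gs 1 \<alpha> t) \<le> K" "norm (Gs (-1) \<alpha>1 t) \<le> K" "norm (Gs 1 \<alpha>2 t) \<le> K" for t
    using bnd by (auto intro!: Gs_bound)
  have c: "continuous_on {0..1} (Gs 1 \<alpha>)" "continuous_on {0..1} (Gs (-1) \<alpha>1)"
    by (rule Gs_cont; use ca ca1 M1 M2 M3 M4 N1 N2 N3 N4 in simp)+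
  have fE: "finite (ExS S)" using S by (rule finite_ExS)
  have d1: "(Gs 1 \<alpha> has_vector_derivative Gs (-1) \<alpha>1 t) (at t)" if "t \<in> {0<..<1} - ExS S" for t
    using Gs_deriv[OF that, of \<alpha> \<alpha>1 1] d by blast
  have d2: "(Gs (-1) \<alpha>1 has_vector_derivative Gs 1 \<alpha>2 t) (at t)" if "t \<in> {0<..<1} - ExS S" for t
    using Gs_deriv[OF that, of \<alpha>1 \<alpha>2 "-1"] d by simp
  show ?thesis unfolding W22_def
    using m b c fE d1 d2
    by (auto intro!: Gs_periodic L2_intro weak_deriv_intro)
qed

lemma Gs_tendsto:
  assumes t: "t \<in> {0<..<1} - {1/4,1/2,3/4}"
    and lim: "\<And>u. u \<in> {0<..<1/4} \<Longrightarrow> ((\<lambda>e. A e u) \<longlongrightarrow> A0 u) F"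
  shows "((\<lambda>e. Gs sg (A e) t) \<longlongrightarrow> Gs sg A0 t) F"
proof -
  have cR: "isCont R1 x" "isCont R2 x" "isCont R3 x" for x
    using R_linear by (auto intro: linear_continuous_at)
  consider "t < 1/4" | "1/4 < t" "t < 1/2" | "1/2 < t" "t < 3/4" | "3/4 < t"
    using t by force
  then show ?thesis
  proof cases
    case 1 then show ?thesis using t lim[of t] by (simp add: Gs_01)
  next
    case 2 then show ?thesis using t lim[of "1/2 - t"]
      by (simp add: Gs_01) (intro tendsto_intros isCont_tendsto_compose[OF cR(1)])
  next
    case 3 then show ?thesis using t lim[of "t - 1/2"]
      by (simp add: Gs_01) (intro tendsto_intros isCont_tendsto_compose[OF cR(2)])
  next
    case 4 then show ?thesis using t lim[of "1 - t"]
      by (simp add: Gs_01) (intro tendsto_intros isCont_tendsto_compose[OF cR(3)])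
  qed
qed

lemma conv_Gs:
  fixes A :: "real \<Rightarrow> real \<Rightarrow> vec3"
  assumes lim: "\<And>u. u \<in> {0<..<1/4} \<Longrightarrow> ((\<lambda>e. A e u) \<longlongrightarrow> A0 u) (at_right 0)"
    and ev: "\<forall>\<^sub>F e in at_right 0. A e \<in> borel_measurable borel \<and> (\<forall>u\<in>{0..1/4}. norm (A e u) \<le> K)"
    and m0: "A0 \<in> borel_measurable borel" and b0: "\<And>u. u \<in> {0..1/4} \<Longrightarrow> norm (A0 u) \<le> K"
    and sg: "\<bar>sg\<bar> = 1"
  shows "((\<lambda>e. sqnorm01 (\<lambda>t. Gs sg (A e) t - Gs sg A0 t)) \<longlongrightarrow> 0) (at_right 0)"
proof -
  have K: "0 \<le> K" using b0[of 0] by (meson atLeastAtMost_iff norm_ge_zero order_trans le_numeral_extra(3) zero_le_divide_1_iff zero_le_numeral)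
  have eq: "sqnorm01 h = integral\<^sup>L lborel (\<lambda>t. indicator {0..1} t * (norm (h t))\<^sup>2)" for h
    unfolding sqnorm01_def set_lebesgue_integral_def by simp
  show ?thesis unfolding eq
  proof (rule dom_conv_at_right0[where s="\<lambda>e t. indicator {0..1} t * (norm (Gs sg (A e) t - Gs sg A0 t))\<^sup>2" and w="\<lambda>t. indicator {0..1} t * (2*K)^2"])
    show "\<forall>\<^sub>F e in at_right 0. (\<lambda>t. indicator {0..1} t * (norm (Gs sg (A e) t - Gs sg A0 t))\<^sup>2) \<in> borel_measurable lborel"
      using ev
    proof eventually_elim
      case (elim e)
      then have [measurable]: "Gs sg (A e) \<in> borel_measurable borel" "Gs sg A0 \<in> borel_measurable borel"
        using m0 by (auto intro: Gs_meas)
      show ?case by simp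
    qed
    show "integrable lborel (\<lambda>t::real. indicator {0..1} t * (2 * K)\<^sup>2)"
    proof -
      have "emeasure lborel {0..1::real} < \<infinity>" by simp
      then have "integrable lborel (indicator {0..1::real} :: real \<Rightarrow> real)" by simp
      then show ?thesis by simp
    qed
    show "\<forall>\<^sub>F e in at_right 0. AE t in lborel. norm (indicator {0..1} t * (norm (Gs sg (A e) t - Gs sg A0 t))\<^sup>2) \<le> indicator {0..1} t * (2 * K)\<^sup>2"
      using ev
    proof eventually_elim
      case (elim e)
      have "norm (Gs sg (A e) t - Gs sg A0 t) \<le> 2 * K" for t
      proof -
        have "norm (Gs sg (A e) t - Gs sg A0 t) \<le> norm (Gs sg (A e) t) + norm (Gs sg A0 t)"
          by (rule norm_triangle_ineq4)
        also have "\<dots> \<le> K + K" using elim b0 sg by (intro add_mono Gs_bound) auto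
        finally show ?thesis by simp
      qed
      then have "(norm (Gs sg (A e) t - Gs sg A0 t))\<^sup>2 \<le> (2*K)^2" for t
        by (intro power_mono) auto
      then show ?case
        by (intro AE_I2) (auto simp: indicator_def simp del: power_mult_distrib)
    qed
    show "AE t in lborel. ((\<lambda>e. indicator {0..1} t * (norm (Gs sg (A e) t - Gs sg A0 t))\<^sup>2) \<longlongrightarrow> 0) (at_right 0)"
    proof (rule AE_I'[where N="{0,1/4,1/2,3/4,1}"])
      show "{0,1/4,1/2,3/4,1::real} \<in> null_sets lborel"
        by (intro countable_imp_null_set_lborel) auto
      show "{t \<in> space lborel. \<not> ((\<lambda>e. indicator {0..1} t * (norm (Gs sg (A e) t - Gs sg A0 t))\<^sup>2) \<longlongrightarrow> 0) (at_right 0)} \<subseteq> {0,1/4,1/2,3/4,1}"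
      proof (rule subsetI, rule ccontr)
        fix t assume t: "t \<in> {t \<in> space lborel. \<not> ((\<lambda>e. indicator {0..1} t * (norm (Gs sg (A e) t - Gs sg A0 t))\<^sup>2) \<longlongrightarrow> 0) (at_right 0)}"
          and nt: "t \<notin> {0,1/4,1/2,3/4,1::real}"
        show False
        proof (cases "t \<in> {0..1}")
          case False then show ?thesis using t by simp
        next
          case True
          then have tt: "t \<in> {0<..<1} - {1/4,1/2,3/4}" using nt by auto
          have "((\<lambda>e. Gs sg (A e) t) \<longlongrightarrow> Gs sg A0 t) (at_right 0)" by (rule Gs_tendsto[OF tt lim])
          then have "((\<lambda>e. indicator {0..1} t * (norm (Gs sg (A e) t - Gs sg A0 t))\<^sup>2) \<longlongrightarrow> indicator {0..1} t * (norm (Gs sg A0 t - Gs sg A0 t))\<^sup>2) (at_right 0)"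
            by (intro tendsto_intros)
          then show ?thesis using t by simp
        qed
      qed
    qed
  qed
qed


lemma cont_if_le:
  fixes f g :: "real \<Rightarrow> 'b::topological_space"
  assumes "continuous_on UNIV f" "continuous_on UNIV g" "f a = g a"
  shows "continuous_on UNIV (\<lambda>x. if x \<le> a then f x else g x)"
proof -
  have "continuous_on {..a} (\<lambda>x. if x \<le> a then f x else g x)"
    by (rule continuous_on_eq[OF continuous_on_subset[OF assms(1)]]) auto
  moreover have "continuous_on {a..} (\<lambda>x. if x \<le> a then f x else g x)"
    by (rule continuous_on_eq[OF continuous_on_subset[OF assms(2)]]) (use assms(3) in auto)
  ultimately have "continuous_on ({..a} \<union> {a..}) (\<lambda>x. if x \<le> a then f x else g x)"
    by (intro continuous_on_closed_Un) auto
  moreover have "{..a} \<union> {a..} = (UNIV :: real set)" by auto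
  ultimately show ?thesis by simp
qed

lemma meas_if_le[measurable]:
  fixes f g :: "real \<Rightarrow> 'b::topological_space"
  assumes [measurable]: "f \<in> borel_measurable borel" "g \<in> borel_measurable borel"
  shows "(\<lambda>x. if x \<le> a then f x else g x) \<in> borel_measurable borel"
  by measurable

section \<open>The limit curve\<close>

definition a2d1 :: "real \<Rightarrow> vec3" where
  "a2d1 t = mk3 (sin (4*pi*t)) (cos (4*pi*t)) 0"
definition a2d2 :: "real \<Rightarrow> vec3" where
  "a2d2 t = mk3 (4*pi*cos (4*pi*t)) (- (4 * pi * sin (4*pi*t))) 0"

lemma alpha2_mk3: "alpha2 t = mk3 ((1 - cos (4*pi*t)) / (4*pi)) (sin (4*pi*t) / (4*pi)) 0"
  by (simp add: alpha2_def mk3_scaleR)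

lemma alpha2_vd: "(alpha2 has_vector_derivative a2d1 t) (at t)"
  unfolding alpha2_mk3[abs_def] a2d1_def
  by (rule mk3_vd) (auto intro!: derivative_eq_intros)

lemma a2d1_vd: "(a2d1 has_vector_derivative a2d2 t) (at t)"
  unfolding a2d1_def[abs_def] a2d2_def
  by (rule mk3_vd) (auto intro!: derivative_eq_intros)

lemma alpha2_cont: "continuous_on UNIV alpha2" "continuous_on UNIV a2d1" "continuous_on UNIV a2d2"
  unfolding alpha2_mk3[abs_def] a2d1_def[abs_def] a2d2_def[abs_def]
  by (intro continuous_intros; simp)+

lemma div4pi: "\<bar>x / (4*pi)\<bar> \<le> \<bar>x\<bar>"
proof -
  have "\<bar>x / (4*pi)\<bar> = \<bar>x\<bar> / (4*pi)" by (simp add: abs_divide)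
  also have "\<dots> \<le> \<bar>x\<bar> / 1" using pi_gt3 by (intro divide_left_mono) auto
  finally show ?thesis by simp
qed

lemma alpha2_bounds: "norm (alpha2 t) \<le> 100" "norm (a2d1 t) \<le> 100" "norm (a2d2 t) \<le> 100"
proof -
  have p: "pi \<le> 4" using pi_less_4 by simp
  have "norm (alpha2 t) \<le> \<bar>(1 - cos (4*pi*t)) / (4*pi)\<bar> + \<bar>sin (4*pi*t) / (4*pi)\<bar> + \<bar>0\<bar>"
    unfolding alpha2_mk3 by (rule norm_mk3_le)
  also have "\<dots> \<le> 2 + 1 + 0"
  proof -
    have "\<bar>(1 - cos (4*pi*t)) / (4*pi)\<bar> \<le> \<bar>1 - cos (4*pi*t)\<bar>"
      by (rule div4pi)
    also have "\<dots> \<le> 2" using abs_cos_le_one[of "4*pi*t"] by linarith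
    finally have 1: "\<bar>(1 - cos (4*pi*t)) / (4*pi)\<bar> \<le> 2" .
    have "\<bar>sin (4*pi*t) / (4*pi)\<bar> \<le> \<bar>sin (4*pi*t)\<bar>"
      by (rule div4pi)
    also have "\<dots> \<le> 1" by simp
    finally have 2: "\<bar>sin (4*pi*t) / (4*pi)\<bar> \<le> 1" .
    show ?thesis using 1 2 by linarith
  qed
  finally show "norm (alpha2 t) \<le> 100" by simp
  have "norm (a2d1 t) \<le> \<bar>sin (4*pi*t)\<bar> + \<bar>cos (4*pi*t)\<bar> + \<bar>0\<bar>"
    unfolding a2d1_def by (rule norm_mk3_le)
  also have "\<dots> \<le> 1 + 1 + 0" by (intro add_mono) auto
  finally show "norm (a2d1 t) \<le> 100" by simp
  have "norm (a2d2 t) \<le> \<bar>4*pi*cos (4*pi*t)\<bar> + \<bar>- (4 * pi * sin (4*pi*t))\<bar> + \<bar>0\<bar>"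
    unfolding a2d2_def by (rule norm_mk3_le)
  also have "\<dots> \<le> 16 + 16 + 0"
  proof -
    have "\<bar>4*pi*cos (4*pi*t)\<bar> = 4*pi*\<bar>cos (4*pi*t)\<bar>" by (simp add: abs_mult)
    also have "\<dots> \<le> 4*4*1" using p by (intro mult_mono) auto
    finally have 1: "\<bar>4*pi*cos (4*pi*t)\<bar> \<le> 16" by simp
    have "\<bar>- (4 * pi * sin (4*pi*t))\<bar> = 4*pi*\<bar>sin (4*pi*t)\<bar>" by (simp add: abs_mult)
    also have "\<dots> \<le> 4*4*1" using p by (intro mult_mono) auto
    finally have 2: "\<bar>- (4 * pi * sin (4*pi*t))\<bar> \<le> 16" by simp
    show ?thesis using 1 2 by linarith
  qed
  finally show "norm (a2d2 t) \<le> 100" by simp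
qed

lemma W22_tpc: "W22 tpc_pi (Gs (-1) a2d1) (Gs 1 a2d2)"
  unfolding tpc_pi_def Gsym_Gs
proof (rule W22_Gs[where K=100 and S="{}"])
  show "a2d2 \<in> borel_measurable borel" using alpha2_cont(3) by (rule borel_measurable_continuous_onI)
  show "R1 (alpha2 (1/4)) = alpha2 (1/4)" "R2 (alpha2 0) = R1 (alpha2 0)"
    "R3 (alpha2 (1/4)) = R2 (alpha2 (1/4))" "R3 (alpha2 0) = alpha2 0"
    "- R1 (a2d1 (1/4)) = a2d1 (1/4)" "R2 (a2d1 0) = - R1 (a2d1 0)"
    "- R3 (a2d1 (1/4)) = R2 (a2d1 (1/4))" "- R3 (a2d1 0) = a2d1 0"
    by (simp_all add: alpha2_mk3 a2d1_def mk3_uminus)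
qed (auto simp: alpha2_cont alpha2_bounds alpha2_vd a2d1_vd)


definition phiT1 :: "int \<Rightarrow> real \<Rightarrow> real" where
  "phiT1 b x = (if x \<le> (real_of_int b - 1)/2 then 1
     else if x \<le> (real_of_int b + 1)/2 then - (x - (real_of_int b + 1)/2) else 0)"
definition phiT2 :: "int \<Rightarrow> real \<Rightarrow> real" where
  "phiT2 b x = (if x \<le> (real_of_int b - 1)/2 then 0
     else if x \<le> (real_of_int b + 1)/2 then -1 else 0)"
definition phiE1 :: "int \<Rightarrow> real \<Rightarrow> real \<Rightarrow> real" where
  "phiE1 b \<epsilon> t = pi / \<epsilon> * phiT1 b (t / \<epsilon>)"
definition phiE2 :: "int \<Rightarrow> real \<Rightarrow> real \<Rightarrow> real" where
  "phiE2 b \<epsilon> t = pi / \<epsilon>^2 * phiT2 b (t / \<epsilon>)"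
definition kap :: "int \<Rightarrow> real" where
  "kap b = (-1) ^ nat ((b - 1) div 2)"
definition cE :: "int \<Rightarrow> real \<Rightarrow> real" where
  "cE b \<epsilon> = (real_of_int b + 1) * \<epsilon> / 2"
definition hel1 :: "int \<Rightarrow> real \<Rightarrow> real \<Rightarrow> vec3" where
  "hel1 b \<epsilon> t = mk3 (rhoE \<epsilon> * kap b * cos (phiE b \<epsilon> t) * phiE1 b \<epsilon> t) 1
     (- (rhoE \<epsilon> * sin (phiE b \<epsilon> t) * phiE1 b \<epsilon> t))"
definition hel2 :: "int \<Rightarrow> real \<Rightarrow> real \<Rightarrow> vec3" where
  "hel2 b \<epsilon> t = mk3 (rhoE \<epsilon> * kap b * (cos (phiE b \<epsilon> t) * phiE2 b \<epsilon> t - sin (phiE b \<epsilon> t) * (phiE1 b \<epsilon> t)^2)) 0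
     (- (rhoE \<epsilon> * (sin (phiE b \<epsilon> t) * phiE2 b \<epsilon> t + cos (phiE b \<epsilon> t) * (phiE1 b \<epsilon> t)^2)))"
definition circ :: "int \<Rightarrow> real \<Rightarrow> real \<Rightarrow> vec3" where
  "circ b \<epsilon> t = mk3 (rhoE \<epsilon> + rE b \<epsilon> - rE b \<epsilon> * cos ((t - cE b \<epsilon>) / rE b \<epsilon>))
     (cE b \<epsilon> + rE b \<epsilon> * sin ((t - cE b \<epsilon>) / rE b \<epsilon>)) 0"
definition circ1 :: "int \<Rightarrow> real \<Rightarrow> real \<Rightarrow> vec3" where
  "circ1 b \<epsilon> t = mk3 (sin ((t - cE b \<epsilon>) / rE b \<epsilon>)) (cos ((t - cE b \<epsilon>) / rE b \<epsilon>)) 0"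
definition circ2 :: "int \<Rightarrow> real \<Rightarrow> real \<Rightarrow> vec3" where
  "circ2 b \<epsilon> t = mk3 (cos ((t - cE b \<epsilon>) / rE b \<epsilon>) / rE b \<epsilon>) (- (sin ((t - cE b \<epsilon>) / rE b \<epsilon>) / rE b \<epsilon>)) 0"
definition lineE :: "int \<Rightarrow> real \<Rightarrow> real \<Rightarrow> vec3" where
  "lineE b \<epsilon> t = mk3 (rhoE \<epsilon> + 2 * rE b \<epsilon>) (1/4 - t) 0"
definition alpha1E :: "int \<Rightarrow> real \<Rightarrow> real \<Rightarrow> vec3" where
  "alpha1E b \<epsilon> t = (if t \<le> cE b \<epsilon> then hel1 b \<epsilon> t else if t \<le> 1/4 - cE b \<epsilon> then circ1 b \<epsilon> t else mk3 0 (-1) 0)"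
definition alpha2E :: "int \<Rightarrow> real \<Rightarrow> real \<Rightarrow> vec3" where
  "alpha2E b \<epsilon> t = (if t \<le> cE b \<epsilon> then hel2 b \<epsilon> t else if t \<le> 1/4 - cE b \<epsilon> then circ2 b \<epsilon> t else 0)"

lemma alphaE_eq: "alphaE b \<epsilon> = (\<lambda>t. if t \<le> cE b \<epsilon> then helE b \<epsilon> t
   else if t \<le> 1/4 - cE b \<epsilon> then circ b \<epsilon> t else lineE b \<epsilon> t)"
  by (simp add: fun_eq_iff alphaE_def stadE_def Let_def cE_def circ_def lineE_def)

lemma helE_eq: "helE b \<epsilon> = (\<lambda>t. mk3 (rhoE \<epsilon> * kap b * sin (phiE b \<epsilon> t)) t (rhoE \<epsilon> * cos (phiE b \<epsilon> t)))"
  by (simp add: fun_eq_iff helE_def kap_def)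

lemma phiT_eq: "phiT b = (\<lambda>x. if x \<le> (real_of_int b - 1)/2 then x
     else if x \<le> (real_of_int b + 1)/2 then real_of_int b / 2 - (1/2) * (x - (real_of_int b + 1)/2)^2
     else real_of_int b / 2)"
  by (simp add: fun_eq_iff phiT_def)

lemma phiT_cont_U: "continuous_on UNIV (phiT b)"
  unfolding phiT_eq
  by (intro cont_if_le continuous_intros) (auto simp: power2_eq_square field_simps)

lemma phiT1_cont_U: "continuous_on UNIV (phiT1 b)"
  unfolding phiT1_def[abs_def]
  by (intro cont_if_le continuous_intros) (auto simp: field_simps)

lemma phiT_cont[continuous_intros]: "continuous_on S g \<Longrightarrow> continuous_on S (\<lambda>t. phiT b (g t))"
  by (rule continuous_on_compose2[OF phiT_cont_U]) simp_all

lemma phiT1_cont[continuous_intros]: "continuous_on S g \<Longrightarrow> continuous_on S (\<lambda>t. phiT1 b (g t))"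
  by (rule continuous_on_compose2[OF phiT1_cont_U]) simp_all

lemma phiT2_meas[measurable]: "phiT2 b \<in> borel_measurable borel"
  unfolding phiT2_def[abs_def] by measurable

lemma phiT_deriv:
  assumes "x \<noteq> (real_of_int b - 1)/2" "x \<noteq> (real_of_int b + 1)/2" "real_of_int b \<ge> 0"
  shows "(phiT b has_real_derivative phiT1 b x) (at x) \<and> (phiT1 b has_real_derivative phiT2 b x) (at x)"
proof -
  define p where "p = (real_of_int b - 1)/2"
  define q where "q = (real_of_int b + 1)/2"
  have pq: "p < q" unfolding p_def q_def by simp
  consider "x < p" | "p < x" "x < q" | "q < x" using assms unfolding p_def q_def by fastforce
  then show ?thesis
  proof cases
    case 1
    have "((\<lambda>x. x) has_real_derivative 1) (at x)" "((\<lambda>x. 1) has_real_derivative 0) (at x)"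
      by (auto intro!: derivative_eq_intros)
    note D = this
    have e: "phiT1 b x = 1" "phiT2 b x = 0" using 1 by (auto simp: phiT1_def phiT2_def p_def)
    have "(phiT b has_real_derivative 1) (at x)"
      by (rule has_field_derivative_transform_within_open[OF D(1), where S="{..<p}"]) (use 1 in \<open>auto simp: phiT_def p_def\<close>)
    moreover have "(phiT1 b has_real_derivative 0) (at x)"
      by (rule has_field_derivative_transform_within_open[OF D(2), where S="{..<p}"]) (use 1 in \<open>auto simp: phiT1_def p_def\<close>)
    ultimately show ?thesis using e by simp
  next
    case 2
    have "((\<lambda>x. real_of_int b / 2 - (1/2) * (x - q)^2) has_real_derivative (- (x - q))) (at x)"
      "((\<lambda>x. - (x - q)) has_real_derivative -1) (at x)"
      by (auto intro!: derivative_eq_intros simp: field_simps)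
    note D = this
    have e: "phiT1 b x = - (x - q)" "phiT2 b x = -1" using 2 by (auto simp: phiT1_def phiT2_def p_def q_def)
    have "(phiT b has_real_derivative - (x - q)) (at x)"
      by (rule has_field_derivative_transform_within_open[OF D(1), where S="{p<..<q}"]) (use 2 in \<open>auto simp: phiT_def p_def q_def\<close>)
    moreover have "(phiT1 b has_real_derivative -1) (at x)"
      by (rule has_field_derivative_transform_within_open[OF D(2), where S="{p<..<q}"]) (use 2 in \<open>auto simp: phiT1_def p_def q_def\<close>)
    ultimately show ?thesis using e by simp
  next
    case 3
    have "((\<lambda>x. real_of_int b / 2) has_real_derivative 0) (at x)" "((\<lambda>x. 0) has_real_derivative 0) (at x)"
      by (auto intro!: derivative_eq_intros)
    note D = this
    have e: "phiT1 b x = 0" "phiT2 b x = 0" using 3 pq by (auto simp: phiT1_def phiT2_def p_def q_def)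
    have "(phiT b has_real_derivative 0) (at x)"
      by (rule has_field_derivative_transform_within_open[OF D(1), where S="{q<..}"]) (use 3 pq in \<open>auto simp: phiT_def p_def q_def\<close>)
    moreover have "(phiT1 b has_real_derivative 0) (at x)"
      by (rule has_field_derivative_transform_within_open[OF D(2), where S="{q<..}"]) (use 3 pq in \<open>auto simp: phiT1_def p_def q_def\<close>)
    ultimately show ?thesis using e by simp
  qed
qed

lemma phiE_deriv:
  assumes "t \<noteq> \<epsilon> * (real_of_int b - 1)/2" "t \<noteq> \<epsilon> * (real_of_int b + 1)/2" "real_of_int b \<ge> 0" "\<epsilon> > 0"
  shows "(phiE b \<epsilon> has_real_derivative phiE1 b \<epsilon> t) (at t) \<and> (phiE1 b \<epsilon> has_real_derivative phiE2 b \<epsilon> t) (at t)"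
proof -
  have e0: "\<epsilon> \<noteq> 0" using assms by simp
  have "t / \<epsilon> \<noteq> (real_of_int b - 1)/2" "t / \<epsilon> \<noteq> (real_of_int b + 1)/2"
    using assms e0 by (auto simp: divide_eq_eq mult.commute)
  from phiT_deriv[OF this assms(3)] have d: "(phiT b has_real_derivative phiT1 b (t/\<epsilon>)) (at (t/\<epsilon>))"
    "(phiT1 b has_real_derivative phiT2 b (t/\<epsilon>)) (at (t/\<epsilon>))" by auto
  have i: "((\<lambda>t. t / \<epsilon>) has_real_derivative 1/\<epsilon>) (at t)" using e0 by (auto intro!: derivative_eq_intros)
  have "((\<lambda>t. pi * phiT b (t / \<epsilon>)) has_real_derivative pi * (phiT1 b (t/\<epsilon>) * (1/\<epsilon>))) (at t)"
    by (intro DERIV_cmult DERIV_chain2[OF d(1) i])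
  moreover have "((\<lambda>t. pi / \<epsilon> * phiT1 b (t / \<epsilon>)) has_real_derivative pi / \<epsilon> * (phiT2 b (t/\<epsilon>) * (1/\<epsilon>))) (at t)"
    by (intro DERIV_cmult DERIV_chain2[OF d(2) i])
  moreover have E1: "phiE b \<epsilon> = (\<lambda>t. pi * phiT b (t / \<epsilon>))" by (simp add: fun_eq_iff phiE_def)
  moreover have E2: "phiE1 b \<epsilon> = (\<lambda>t. pi / \<epsilon> * phiT1 b (t / \<epsilon>))" by (simp add: fun_eq_iff phiE1_def)
  moreover have "pi * (phiT1 b (t/\<epsilon>) * (1/\<epsilon>)) = phiE1 b \<epsilon> t" by (simp add: phiE1_def)
  moreover have "pi / \<epsilon> * (phiT2 b (t/\<epsilon>) * (1/\<epsilon>)) = phiE2 b \<epsilon> t" by (simp add: phiE2_def power2_eq_square)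
  ultimately show ?thesis by (metis (no_types, lifting) DERIV_cong)
qed

lemma hel_vd:
  assumes "(\<phi> has_real_derivative d) (at t)"
  shows "((\<lambda>t. mk3 (k * sin (\<phi> t)) t (p * cos (\<phi> t))) has_vector_derivative
     mk3 (k * cos (\<phi> t) * d) 1 (- (p * sin (\<phi> t) * d))) (at t)"
  by (rule mk3_vd) (auto intro!: derivative_eq_intros assms)

lemma hel1_vd:
  assumes "(\<phi> has_real_derivative \<phi>1 t) (at t)" "(\<phi>1 has_real_derivative d2) (at t)"
  shows "((\<lambda>t. mk3 (k * cos (\<phi> t) * \<phi>1 t) 1 (- (p * sin (\<phi> t) * \<phi>1 t))) has_vector_derivative
     mk3 (k * (cos (\<phi> t) * d2 - sin (\<phi> t) * (\<phi>1 t)^2)) 0 (- (p * (sin (\<phi> t) * d2 + cos (\<phi> t) * (\<phi>1 t)^2)))) (at t)"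
  by (rule mk3_vd) (auto intro!: derivative_eq_intros assms simp: power2_eq_square algebra_simps)


lemma kap_sq: "kap b * kap b = 1"
  by (simp add: kap_def power_mult_distrib[symmetric] flip: power_add)

lemma abs_kap: "\<bar>kap b\<bar> = 1"
  by (simp add: kap_def)

lemma sin_cos_half:
  assumes "odd b" "1 \<le> b"
  shows "sin (pi * (real_of_int b / 2)) = kap b" "cos (pi * (real_of_int b / 2)) = 0"
proof -
  obtain k where k: "b = 2*k + 1" using assms(1) by (metis oddE)
  have k0: "0 \<le> k" using assms(2) k by simp
  have d: "(b - 1) div 2 = k" using k by simp
  have x: "pi * (real_of_int b / 2) = real (nat k) * pi + pi/2"
    using k k0 by (simp add: field_simps)
  show "sin (pi * (real_of_int b / 2)) = kap b"
    unfolding x kap_def d by (simp add: sin_add cos_npi)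
  show "cos (pi * (real_of_int b / 2)) = 0"
    unfolding x by (simp add: cos_add)
qed

lemma phiE_cont[continuous_intros]: "\<epsilon> \<noteq> 0 \<Longrightarrow> continuous_on S g \<Longrightarrow> continuous_on S (\<lambda>t. phiE b \<epsilon> (g t))"
  unfolding phiE_def by (intro continuous_intros) auto

lemma phiE1_cont[continuous_intros]: "\<epsilon> \<noteq> 0 \<Longrightarrow> continuous_on S g \<Longrightarrow> continuous_on S (\<lambda>t. phiE1 b \<epsilon> (g t))"
  unfolding phiE1_def by (intro continuous_intros) auto

lemma abs_mult_le1: "\<bar>y\<bar> \<le> 1 \<Longrightarrow> \<bar>y * a\<bar> \<le> \<bar>a::real\<bar>"
  unfolding abs_mult using mult_right_mono[of "\<bar>y\<bar>" 1 "\<bar>a\<bar>"] by simp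

lemma abs_mult_le1': "\<bar>y\<bar> \<le> 1 \<Longrightarrow> \<bar>a * y\<bar> \<le> \<bar>a::real\<bar>"
  using abs_mult_le1[of y a] by (simp add: mult.commute)

lemma abs_phiT1: "\<bar>phiT1 b x\<bar> \<le> 1"
proof -
  consider "x \<le> (real_of_int b - 1)/2" | "\<not> x \<le> (real_of_int b - 1)/2" "x \<le> (real_of_int b + 1)/2"
    | "\<not> x \<le> (real_of_int b + 1)/2" by linarith
  then show ?thesis
  proof cases
    case 2
    then have "phiT1 b x = - (x - (real_of_int b + 1)/2)" by (simp add: phiT1_def)
    note e = this
    have "phiT1 b x \<le> 1" using 2 e by (simp add: field_simps)
    moreover have "- phiT1 b x \<le> 1" using 2 e by (simp add: field_simps)
    ultimately show ?thesis unfolding abs_le_iff by blast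
  qed (auto simp: phiT1_def)
qed

lemma abs_phiT2: "\<bar>phiT2 b x\<bar> \<le> 1"
  by (auto simp: phiT2_def)

locale epsctx =
  fixes b :: int and \<epsilon> :: real
  assumes oddb: "odd b" and b3: "3 \<le> b" and e0: "0 < \<epsilon>" and e1: "\<epsilon> < 1/(8*(real_of_int b + 1))"
begin

lemma B4: "4 \<le> real_of_int b + 1" using b3 by simp

lemma Be: "(real_of_int b + 1) * \<epsilon> < 1/8"
proof -
  have "(real_of_int b + 1) * \<epsilon> < (real_of_int b + 1) * (1/(8*(real_of_int b + 1)))"
    using B4 e1 by (intro mult_strict_left_mono) auto
  also have "(real_of_int b + 1) * (1/(8*(real_of_int b + 1))) = 1/8" using B4 by simp
  finally show ?thesis .
qed

lemma c_pos: "0 < cE b \<epsilon>" using e0 B4 by (simp add: cE_def)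
lemma c_small: "cE b \<epsilon> < 1/16" using Be unfolding cE_def by linarith
lemma e_small: "\<epsilon> < 1/32"
  using Be mult_right_mono[OF B4, of \<epsilon>] e0 by linarith
lemma rho_small: "rhoE \<epsilon> \<le> \<epsilon>" "0 \<le> rhoE \<epsilon>"
  using e0 e_small by (simp_all add: rhoE_def power2_eq_square mult_left_le_one_le)

lemma r_bounds: "1/(8*pi) \<le> rE b \<epsilon>" "rE b \<epsilon> \<le> 1/(4*pi)" "0 < rE b \<epsilon>"
proof -
  have a: "1/8 \<le> 1/4 - (real_of_int b + 1) * \<epsilon>" using Be by simp
  have b: "1/4 - (real_of_int b + 1) * \<epsilon> \<le> 1/4" using B4 e0 by simp
  have "1/8/pi \<le> (1/4 - (real_of_int b + 1) * \<epsilon>)/pi"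
    by (rule divide_right_mono[OF a]) (use pi_gt3 in simp)
  then show "1/(8*pi) \<le> rE b \<epsilon>" unfolding rE_def by simp
  then show "0 < rE b \<epsilon>" using pi_gt3 by (smt (verit) divide_pos_pos)
  have "(1/4 - (real_of_int b + 1) * \<epsilon>)/pi \<le> 1/4/pi"
    by (rule divide_right_mono[OF b]) (use pi_gt3 in simp)
  then show "rE b \<epsilon> \<le> 1/(4*pi)" unfolding rE_def by simp
qed

lemma r_le1: "rE b \<epsilon> \<le> 1/12"
proof -
  have "1/(4*pi) \<le> 1/12" using pi_gt3 by (simp add: field_simps)
  then show ?thesis using r_bounds by linarith
qed

lemma inv_r: "1 / rE b \<epsilon> \<le> 8 * pi"
proof -
  have "1 / rE b \<epsilon> \<le> 1 / (1/(8*pi))"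
    using r_bounds pi_gt3 by (intro divide_left_mono) auto
  then show ?thesis by simp
qed

lemma r_pi: "(1/4 - cE b \<epsilon> - cE b \<epsilon>) / rE b \<epsilon> = pi"
proof -
  have "1/4 - cE b \<epsilon> - cE b \<epsilon> = 1/4 - (real_of_int b + 1) * \<epsilon>" by (simp add: cE_def)
  moreover have "1/4 - (real_of_int b + 1) * \<epsilon> \<noteq> 0" using Be by simp
  ultimately show ?thesis unfolding rE_def by simp
qed

lemma phiE_c: "phiE b \<epsilon> (cE b \<epsilon>) = pi * (real_of_int b / 2)"
  using e0 by (simp add: phiE_def phiT_def cE_def)

lemma phiE1_c: "phiE1 b \<epsilon> (cE b \<epsilon>) = 0"
  using e0 by (simp add: phiE1_def phiT1_def cE_def)

lemma match_hel: "helE b \<epsilon> (cE b \<epsilon>) = circ b \<epsilon> (cE b \<epsilon>)"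
  using sin_cos_half[OF oddb] b3 kap_sq[of b]
  by (simp add: helE_eq phiE_c circ_def mult.assoc)

lemma match_line: "circ b \<epsilon> (1/4 - cE b \<epsilon>) = lineE b \<epsilon> (1/4 - cE b \<epsilon>)"
  using r_pi by (simp add: circ_def lineE_def add.commute)

lemma match_hel1: "hel1 b \<epsilon> (cE b \<epsilon>) = circ1 b \<epsilon> (cE b \<epsilon>)"
  by (simp add: hel1_def circ1_def phiE1_c)

lemma match_line1: "circ1 b \<epsilon> (1/4 - cE b \<epsilon>) = mk3 0 (-1) 0"
  using r_pi by (simp add: circ1_def)

lemma cont_alphaE: "continuous_on UNIV (alphaE b \<epsilon>)"
  unfolding alphaE_eq
proof (intro cont_if_le)
  show "continuous_on UNIV (helE b \<epsilon>)" unfolding helE_eq using e0 by (intro continuous_intros) auto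
  show "continuous_on UNIV (circ b \<epsilon>)" unfolding circ_def[abs_def] using r_bounds by (intro continuous_intros) auto
  show "continuous_on UNIV (lineE b \<epsilon>)" unfolding lineE_def[abs_def] by (intro continuous_intros)
qed (use match_hel match_line c_small in auto)

lemma cont_alpha1E: "continuous_on UNIV (alpha1E b \<epsilon>)"
  unfolding alpha1E_def[abs_def]
proof (intro cont_if_le)
  show "continuous_on UNIV (hel1 b \<epsilon>)" unfolding hel1_def[abs_def] using e0 by (intro continuous_intros) auto
  show "continuous_on UNIV (circ1 b \<epsilon>)" unfolding circ1_def[abs_def] using r_bounds by (intro continuous_intros) auto
qed (use match_hel1 match_line1 c_small in auto)

lemma meas_alpha2E: "alpha2E b \<epsilon> \<in> borel_measurable borel"
proof -
  have [measurable]: "phiE b \<epsilon> \<in> borel_measurable borel" "phiE1 b \<epsilon> \<in> borel_measurable borel"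
    using e0 by (auto intro!: borel_measurable_continuous_onI continuous_intros phiE_cont[where g="\<lambda>x. x", simplified]
        phiE1_cont[where g="\<lambda>x. x", simplified])
  have [measurable]: "phiE2 b \<epsilon> \<in> borel_measurable borel"
    unfolding phiE2_def[abs_def] by measurable
  show ?thesis
    unfolding alpha2E_def[abs_def] hel2_def[abs_def] circ2_def[abs_def] by measurable
qed

end


lemma norm_mk3_le0: "norm (mk3 x y 0) \<le> \<bar>x\<bar> + \<bar>y\<bar>"
  using norm_mk3_le[of x y 0] by simp

lemma prod3_le: "\<bar>a\<bar> \<le> 1 \<Longrightarrow> \<bar>b\<bar> \<le> 1 \<Longrightarrow> \<bar>c\<bar> \<le> M \<Longrightarrow> \<bar>a*b*c\<bar> \<le> (M::real)"
proof -
  assume h: "\<bar>a\<bar> \<le> 1" "\<bar>b\<bar> \<le> 1" "\<bar>c\<bar> \<le> M"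
  have "\<bar>a\<bar>*\<bar>b\<bar> \<le> 1" using h by (intro mult_le_one) auto
  then have "\<bar>a\<bar>*\<bar>b\<bar>*\<bar>c\<bar> \<le> 1 * M" using h by (intro mult_mono) auto
  then show ?thesis by (simp add: abs_mult)
qed

lemma prod2_le: "\<bar>a\<bar> \<le> 1 \<Longrightarrow> \<bar>c\<bar> \<le> M \<Longrightarrow> \<bar>a*c\<bar> \<le> (M::real)"
  using prod3_le[of a 1 c M] by simp

context epsctx
begin

lemma rho_phiE1: "rhoE \<epsilon> * phiE1 b \<epsilon> t = pi * \<epsilon> * phiT1 b (t/\<epsilon>)"
  using e0 by (simp add: rhoE_def phiE1_def power2_eq_square)

lemma rho_phiE2: "rhoE \<epsilon> * phiE2 b \<epsilon> t = pi * phiT2 b (t/\<epsilon>)"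
  using e0 by (simp add: rhoE_def phiE2_def power2_eq_square)

lemma rho_phiE1_sq: "rhoE \<epsilon> * (phiE1 b \<epsilon> t)^2 = pi^2 * (phiT1 b (t/\<epsilon>))^2"
  using e0 by (simp add: rhoE_def phiE1_def power2_eq_square)

lemma derivs:
  assumes u: "u \<in> {0<..<1/4} - {\<epsilon> * (real_of_int b - 1)/2, cE b \<epsilon>, 1/4 - cE b \<epsilon>}"
  shows "(alphaE b \<epsilon> has_vector_derivative alpha1E b \<epsilon> u) (at u) \<and>
         (alpha1E b \<epsilon> has_vector_derivative alpha2E b \<epsilon> u) (at u)"
proof -
  have rne: "rE b \<epsilon> \<noteq> 0" using r_bounds by simp
  consider "u < cE b \<epsilon>" | "cE b \<epsilon> < u" "u < 1/4 - cE b \<epsilon>" | "1/4 - cE b \<epsilon> < u"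
    using u by force
  then show ?thesis
  proof cases
    case 1
    have ce: "\<epsilon> * (real_of_int b + 1)/2 = cE b \<epsilon>" by (simp add: cE_def mult.commute)
    have ne: "u \<noteq> \<epsilon> * (real_of_int b - 1)/2" "u \<noteq> \<epsilon> * (real_of_int b + 1)/2"
      using u 1 ce by auto
    have D: "(phiE b \<epsilon> has_real_derivative phiE1 b \<epsilon> u) (at u)"
      "(phiE1 b \<epsilon> has_real_derivative phiE2 b \<epsilon> u) (at u)"
      using phiE_deriv[OF ne _ e0] b3 by auto
    have H1: "(helE b \<epsilon> has_vector_derivative hel1 b \<epsilon> u) (at u)"
      unfolding helE_eq hel1_def by (rule hel_vd[OF D(1)])
    have H2: "(hel1 b \<epsilon> has_vector_derivative hel2 b \<epsilon> u) (at u)"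
      unfolding hel1_def[abs_def] hel2_def by (rule hel1_vd[OF D(1) D(2)])
    have "(alphaE b \<epsilon> has_vector_derivative hel1 b \<epsilon> u) (at u)"
      by (rule has_vector_derivative_transform_within_open[OF H1, where S="{..<cE b \<epsilon>}"])
         (use 1 in \<open>auto simp: alphaE_eq\<close>)
    moreover have "(alpha1E b \<epsilon> has_vector_derivative hel2 b \<epsilon> u) (at u)"
      by (rule has_vector_derivative_transform_within_open[OF H2, where S="{..<cE b \<epsilon>}"])
         (use 1 in \<open>auto simp: alpha1E_def\<close>)
    ultimately show ?thesis using 1 by (simp add: alpha1E_def alpha2E_def)
  next
    case 2
    have C1: "(circ b \<epsilon> has_vector_derivative circ1 b \<epsilon> u) (at u)"
      unfolding circ_def[abs_def] circ1_def
      by (rule mk3_vd) (use rne in \<open>auto intro!: derivative_eq_intros\<close>)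
    have C2: "(circ1 b \<epsilon> has_vector_derivative circ2 b \<epsilon> u) (at u)"
      unfolding circ1_def[abs_def] circ2_def
      by (rule mk3_vd) (use rne in \<open>auto intro!: derivative_eq_intros\<close>)
    have "(alphaE b \<epsilon> has_vector_derivative circ1 b \<epsilon> u) (at u)"
      by (rule has_vector_derivative_transform_within_open[OF C1, where S="{cE b \<epsilon><..<1/4 - cE b \<epsilon>}"])
         (use 2 in \<open>auto simp: alphaE_eq\<close>)
    moreover have "(alpha1E b \<epsilon> has_vector_derivative circ2 b \<epsilon> u) (at u)"
      by (rule has_vector_derivative_transform_within_open[OF C2, where S="{cE b \<epsilon><..<1/4 - cE b \<epsilon>}"])
         (use 2 in \<open>auto simp: alpha1E_def\<close>)
    ultimately show ?thesis using 2 by (simp add: alpha1E_def alpha2E_def)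
  next
    case 3
    have cc: "cE b \<epsilon> < 1/4 - cE b \<epsilon>" using c_small by simp
    have L1: "(lineE b \<epsilon> has_vector_derivative mk3 0 (-1) 0) (at u)"
      unfolding lineE_def[abs_def]
      by (rule mk3_vd) (auto intro!: derivative_eq_intros)
    have L2: "((\<lambda>t. mk3 0 (-1) 0) has_vector_derivative 0) (at u)"
      by (rule has_vector_derivative_const)
    have "(alphaE b \<epsilon> has_vector_derivative mk3 0 (-1) 0) (at u)"
      by (rule has_vector_derivative_transform_within_open[OF L1, where S="{1/4 - cE b \<epsilon><..}"])
         (use 3 cc in \<open>auto simp: alphaE_eq\<close>)
    moreover have "(alpha1E b \<epsilon> has_vector_derivative 0) (at u)"
      by (rule has_vector_derivative_transform_within_open[OF L2, where S="{1/4 - cE b \<epsilon><..}"])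
         (use 3 cc in \<open>auto simp: alpha1E_def\<close>)
    ultimately show ?thesis using 3 cc by (simp add: alpha1E_def alpha2E_def)
  qed
qed

lemma bnd0: assumes "u \<in> {0..1/4}" shows "norm (alphaE b \<epsilon> u) \<le> 100"
proof -
  have rr: "0 < rE b \<epsilon>" "rE b \<epsilon> \<le> 1/12" using r_bounds r_le1 by auto
  have rh: "0 \<le> rhoE \<epsilon>" "rhoE \<epsilon> \<le> 1/32" using rho_small e_small by auto
  have cs: "0 < cE b \<epsilon>" "cE b \<epsilon> < 1/16" using c_pos c_small by auto
  consider "u \<le> cE b \<epsilon>" | "\<not> u \<le> cE b \<epsilon>" "u \<le> 1/4 - cE b \<epsilon>" | "\<not> u \<le> cE b \<epsilon>" "\<not> u \<le> 1/4 - cE b \<epsilon>" by blast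
  then show ?thesis
  proof cases
    case 1
    have "norm (alphaE b \<epsilon> u) \<le> \<bar>rhoE \<epsilon> * kap b * sin (phiE b \<epsilon> u)\<bar> + \<bar>u\<bar> + \<bar>rhoE \<epsilon> * cos (phiE b \<epsilon> u)\<bar>"
      using 1 by (simp add: alphaE_eq helE_eq norm_mk3_le)
    also have "\<dots> \<le> 1 + 1 + 1"
    proof (intro add_mono)
      show "\<bar>rhoE \<epsilon> * kap b * sin (phiE b \<epsilon> u)\<bar> \<le> 1"
        by (rule prod3_le) (use rh abs_kap in auto)
      show "\<bar>u\<bar> \<le> 1" using assms by auto
      show "\<bar>rhoE \<epsilon> * cos (phiE b \<epsilon> u)\<bar> \<le> 1"
        using abs_mult_le1'[of "cos (phiE b \<epsilon> u)" "rhoE \<epsilon>"] rh by simp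
    qed
    finally show ?thesis by simp
  next
    case 2
    have "norm (alphaE b \<epsilon> u) \<le> \<bar>rhoE \<epsilon> + rE b \<epsilon> - rE b \<epsilon> * cos ((u - cE b \<epsilon>) / rE b \<epsilon>)\<bar>
        + \<bar>cE b \<epsilon> + rE b \<epsilon> * sin ((u - cE b \<epsilon>) / rE b \<epsilon>)\<bar>"
      using 2 by (simp add: alphaE_eq circ_def norm_mk3_le0)
    also have "\<dots> \<le> 1 + 1"
    proof (intro add_mono)
      have "\<bar>rE b \<epsilon> * cos ((u - cE b \<epsilon>) / rE b \<epsilon>)\<bar> \<le> 1/12"
        using abs_mult_le1'[of "cos ((u - cE b \<epsilon>) / rE b \<epsilon>)" "rE b \<epsilon>"] rr by simp
      then show "\<bar>rhoE \<epsilon> + rE b \<epsilon> - rE b \<epsilon> * cos ((u - cE b \<epsilon>) / rE b \<epsilon>)\<bar> \<le> 1"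
        using rr rh by (simp add: abs_le_iff) linarith
      have "\<bar>rE b \<epsilon> * sin ((u - cE b \<epsilon>) / rE b \<epsilon>)\<bar> \<le> 1/12"
        using abs_mult_le1'[of "sin ((u - cE b \<epsilon>) / rE b \<epsilon>)" "rE b \<epsilon>"] rr by simp
      then show "\<bar>cE b \<epsilon> + rE b \<epsilon> * sin ((u - cE b \<epsilon>) / rE b \<epsilon>)\<bar> \<le> 1"
        using cs by (simp add: abs_le_iff) linarith
    qed
    finally show ?thesis by simp
  next
    case 3
    have "norm (alphaE b \<epsilon> u) \<le> \<bar>rhoE \<epsilon> + 2 * rE b \<epsilon>\<bar> + \<bar>1/4 - u\<bar>"
      using 3 by (simp add: alphaE_eq lineE_def norm_mk3_le0)
    also have "\<dots> \<le> 1 + 1"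
      using rr rh assms by (intro add_mono) auto
    finally show ?thesis by simp
  qed
qed

end


context epsctx
begin

lemma pe_small: "pi * \<epsilon> \<le> 1"
proof -
  have "pi * \<epsilon> \<le> 4 * (1/32)" using pi_less_4 e_small e0 by (intro mult_mono) auto
  then show ?thesis by simp
qed

lemma P1b: "\<bar>rhoE \<epsilon> * phiE1 b \<epsilon> u\<bar> \<le> 1"
proof -
  have "\<bar>rhoE \<epsilon> * phiE1 b \<epsilon> u\<bar> = (pi * \<epsilon>) * \<bar>phiT1 b (u/\<epsilon>)\<bar>"
    unfolding rho_phiE1 using e0 by (simp add: abs_mult)
  also have "\<dots> \<le> 1 * 1" using pe_small abs_phiT1[of b "u/\<epsilon>"] e0 by (intro mult_mono) auto
  finally show ?thesis by simp
qed

lemma P2b: "\<bar>rhoE \<epsilon> * phiE2 b \<epsilon> u\<bar> \<le> 4"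
proof -
  have "\<bar>rhoE \<epsilon> * phiE2 b \<epsilon> u\<bar> = pi * \<bar>phiT2 b (u/\<epsilon>)\<bar>"
    unfolding rho_phiE2 by (simp add: abs_mult)
  also have "\<dots> \<le> 4 * 1" using pi_less_4 abs_phiT2[of b "u/\<epsilon>"] by (intro mult_mono) auto
  finally show ?thesis by simp
qed

lemma Qb: "\<bar>rhoE \<epsilon> * (phiE1 b \<epsilon> u)^2\<bar> \<le> 16"
proof -
  have "\<bar>rhoE \<epsilon> * (phiE1 b \<epsilon> u)^2\<bar> = pi^2 * (phiT1 b (u/\<epsilon>))^2"
    unfolding rho_phiE1_sq by (simp add: abs_mult)
  also have "\<dots> \<le> 4^2 * 1"
  proof (intro mult_mono)
    show "pi^2 \<le> 4^2" using pi_less_4 by (intro power_mono) auto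
    have "\<bar>phiT1 b (u/\<epsilon>)\<bar>^2 \<le> 1^2" using abs_phiT1[of b "u/\<epsilon>"] by (intro power_mono) auto
    then show "(phiT1 b (u/\<epsilon>))^2 \<le> 1" by simp
  qed auto
  finally show ?thesis by simp
qed

lemma bnd1: assumes "u \<in> {0..1/4}" shows "norm (alpha1E b \<epsilon> u) \<le> 100"
proof -
  consider "u \<le> cE b \<epsilon>" | "\<not> u \<le> cE b \<epsilon>" "u \<le> 1/4 - cE b \<epsilon>" | "\<not> u \<le> cE b \<epsilon>" "\<not> u \<le> 1/4 - cE b \<epsilon>" by blast
  then show ?thesis
  proof cases
    case 1
    have e1: "rhoE \<epsilon> * kap b * cos (phiE b \<epsilon> u) * phiE1 b \<epsilon> u = kap b * cos (phiE b \<epsilon> u) * (rhoE \<epsilon> * phiE1 b \<epsilon> u)"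
      "rhoE \<epsilon> * sin (phiE b \<epsilon> u) * phiE1 b \<epsilon> u = sin (phiE b \<epsilon> u) * (rhoE \<epsilon> * phiE1 b \<epsilon> u)"
      by (simp_all add: mult_ac)
    have eq: "alpha1E b \<epsilon> u = mk3 (kap b * cos (phiE b \<epsilon> u) * (rhoE \<epsilon> * phiE1 b \<epsilon> u)) 1
        (- (sin (phiE b \<epsilon> u) * (rhoE \<epsilon> * phiE1 b \<epsilon> u)))"
      using 1 by (simp add: alpha1E_def hel1_def e1)
    have "norm (alpha1E b \<epsilon> u) \<le> \<bar>kap b * cos (phiE b \<epsilon> u) * (rhoE \<epsilon> * phiE1 b \<epsilon> u)\<bar> + \<bar>1\<bar>
        + \<bar>- (sin (phiE b \<epsilon> u) * (rhoE \<epsilon> * phiE1 b \<epsilon> u))\<bar>"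
      unfolding eq by (rule norm_mk3_le)
    also have "\<dots> \<le> 1 + 1 + 1"
    proof (intro add_mono)
      show "\<bar>kap b * cos (phiE b \<epsilon> u) * (rhoE \<epsilon> * phiE1 b \<epsilon> u)\<bar> \<le> 1"
        by (rule prod3_le) (use abs_kap P1b in auto)
      show "\<bar>- (sin (phiE b \<epsilon> u) * (rhoE \<epsilon> * phiE1 b \<epsilon> u))\<bar> \<le> 1"
        unfolding abs_minus_cancel by (rule prod2_le) (use P1b in auto)
    qed simp
    finally show ?thesis by simp
  next
    case 2
    have "norm (alpha1E b \<epsilon> u) \<le> \<bar>sin ((u - cE b \<epsilon>) / rE b \<epsilon>)\<bar> + \<bar>cos ((u - cE b \<epsilon>) / rE b \<epsilon>)\<bar>"
      using 2 by (simp add: alpha1E_def circ1_def norm_mk3_le0)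
    also have "\<dots> \<le> 1 + 1" by (intro add_mono) auto
    finally show ?thesis by simp
  next
    case 3
    have "norm (alpha1E b \<epsilon> u) \<le> \<bar>0\<bar> + \<bar>-1\<bar>"
      using 3 norm_mk3_le0[of 0 "-1"] by (simp add: alpha1E_def)
    then show ?thesis by simp
  qed
qed

lemma bnd2: assumes "u \<in> {0..1/4}" shows "norm (alpha2E b \<epsilon> u) \<le> 100"
proof -
  consider "u \<le> cE b \<epsilon>" | "\<not> u \<le> cE b \<epsilon>" "u \<le> 1/4 - cE b \<epsilon>" | "\<not> u \<le> cE b \<epsilon>" "\<not> u \<le> 1/4 - cE b \<epsilon>" by blast
  then show ?thesis
  proof cases
    case 1
    define P where "P = rhoE \<epsilon> * phiE2 b \<epsilon> u"
    define Q where "Q = rhoE \<epsilon> * (phiE1 b \<epsilon> u)^2"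
    define s where "s = sin (phiE b \<epsilon> u)"
    define c where "c = cos (phiE b \<epsilon> u)"
    have hP: "\<bar>P\<bar> \<le> 4" "\<bar>Q\<bar> \<le> 16" unfolding P_def Q_def using P2b Qb by auto
    have hs: "\<bar>s\<bar> \<le> 1" "\<bar>c\<bar> \<le> 1" unfolding s_def c_def by auto
    have e1: "rhoE \<epsilon> * kap b * (cos (phiE b \<epsilon> u) * phiE2 b \<epsilon> u - sin (phiE b \<epsilon> u) * (phiE1 b \<epsilon> u)^2)
       = kap b * (c * P - s * Q)"
      "rhoE \<epsilon> * (sin (phiE b \<epsilon> u) * phiE2 b \<epsilon> u + cos (phiE b \<epsilon> u) * (phiE1 b \<epsilon> u)^2) = s * P + c * Q"
      unfolding P_def Q_def s_def c_def by (simp_all add: algebra_simps)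
    have eq: "alpha2E b \<epsilon> u = mk3 (kap b * (c * P - s * Q)) 0 (- (s * P + c * Q))"
      using 1 by (simp add: alpha2E_def hel2_def e1)
    have "norm (alpha2E b \<epsilon> u) \<le> \<bar>kap b * (c * P - s * Q)\<bar> + \<bar>0\<bar> + \<bar>- (s * P + c * Q)\<bar>"
      unfolding eq by (rule norm_mk3_le)
    also have "\<dots> \<le> 20 + 0 + 20"
    proof (intro add_mono)
      have a: "\<bar>c * P\<bar> \<le> 4" "\<bar>s * Q\<bar> \<le> 16" "\<bar>s * P\<bar> \<le> 4" "\<bar>c * Q\<bar> \<le> 16"
        using hs hP by (auto intro!: prod2_le)
      have "\<bar>c * P - s * Q\<bar> \<le> 20" using a by linarith
      then show "\<bar>kap b * (c * P - s * Q)\<bar> \<le> 20" by (intro prod2_le) (use abs_kap in auto)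
      show "\<bar>- (s * P + c * Q)\<bar> \<le> 20" using a by linarith
    qed simp
    finally show ?thesis by simp
  next
    case 2
    define \<theta> where "\<theta> = (u - cE b \<epsilon>) / rE b \<epsilon>"
    have r: "0 < rE b \<epsilon>" "1 / rE b \<epsilon> \<le> 8 * pi" using r_bounds inv_r by auto
    have "\<bar>cos \<theta> / rE b \<epsilon>\<bar> \<le> 1 / rE b \<epsilon>" "\<bar>sin \<theta> / rE b \<epsilon>\<bar> \<le> 1 / rE b \<epsilon>"
      using r by (auto simp: abs_divide divide_right_mono)
    moreover have "1 / rE b \<epsilon> \<le> 32" using r pi_less_4 by linarith
    ultimately have "\<bar>cos \<theta> / rE b \<epsilon>\<bar> \<le> 32" "\<bar>- (sin \<theta> / rE b \<epsilon>)\<bar> \<le> 32" by auto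
    moreover have "norm (alpha2E b \<epsilon> u) \<le> \<bar>cos \<theta> / rE b \<epsilon>\<bar> + \<bar>- (sin \<theta> / rE b \<epsilon>)\<bar>"
    proof -
      have "alpha2E b \<epsilon> u = mk3 (cos \<theta> / rE b \<epsilon>) (- (sin \<theta> / rE b \<epsilon>)) 0"
        using 2 unfolding \<theta>_def by (simp add: alpha2E_def circ2_def)
      then show ?thesis by (simp only: norm_mk3_le0)
    qed
    ultimately show ?thesis by linarith
  next
    case 3
    then show ?thesis by (simp add: alpha2E_def)
  qed
qed

end

section \<open>Pointwise limits\<close>

lemma lim_rho: "((\<lambda>e. rhoE e) \<longlongrightarrow> 0) (at_right 0)"
proof -
  have "((\<lambda>e::real. e^2) \<longlongrightarrow> 0^2) (at_right 0)" by (intro tendsto_intros)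
  then show ?thesis by (simp add: rhoE_def[abs_def])
qed

lemma lim_c: "((\<lambda>e. cE b e) \<longlongrightarrow> 0) (at_right 0)"
proof -
  have "((\<lambda>e::real. (real_of_int b + 1) * e / 2) \<longlongrightarrow> (real_of_int b + 1) * 0 / 2) (at_right 0)" by (intro tendsto_intros) simp
  then show ?thesis by (simp add: cE_def[abs_def])
qed

lemma lim_r: "((\<lambda>e. rE b e) \<longlongrightarrow> 1/(4*pi)) (at_right 0)"
proof -
  have "((\<lambda>e::real. (1/4 - (real_of_int b + 1) * e) / pi) \<longlongrightarrow> (1/4 - (real_of_int b + 1) * 0) / pi) (at_right 0)"
    by (intro tendsto_intros) simp
  then show ?thesis by (simp add: rE_def[abs_def])
qed

lemma ev_mid:
  assumes u: "u \<in> {0<..<1/4}"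
  shows "\<forall>\<^sub>F e in at_right 0. cE b e < u \<and> \<not> u \<le> cE b e \<and> u \<le> 1/4 - cE b e"
proof -
  have "0 < min u (1/4 - u)" using u by auto
  from order_tendstoD(2)[OF lim_c this] show ?thesis
    by eventually_elim auto
qed

lemma arg_lim: "((\<lambda>e. (u - cE b e) / rE b e) \<longlongrightarrow> 4*pi*u) (at_right 0)"
proof -
  have "((\<lambda>e. (u - cE b e) / rE b e) \<longlongrightarrow> (u - 0) / (1/(4*pi))) (at_right 0)"
    by (intro tendsto_intros lim_c lim_r) simp
  then show ?thesis by (simp add: field_simps)
qed

lemma lim0:
  assumes u: "u \<in> {0<..<1/4}"
  shows "((\<lambda>e. alphaE b e u) \<longlongrightarrow> alpha2 u) (at_right 0)"
proof (rule Lim_transform_eventually)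
  have "((\<lambda>e. circ b e u) \<longlongrightarrow> mk3 (0 + 1/(4*pi) - 1/(4*pi) * cos (4*pi*u)) (0 + 1/(4*pi) * sin (4*pi*u)) 0) (at_right 0)"
    unfolding circ_def by (intro tendsto_intros lim_rho lim_r lim_c arg_lim)
  then show "((\<lambda>e. circ b e u) \<longlongrightarrow> alpha2 u) (at_right 0)"
    by (simp add: alpha2_mk3 field_simps)
  show "\<forall>\<^sub>F e in at_right 0. circ b e u = alphaE b e u"
    using ev_mid[OF u, of b] by eventually_elim (simp add: alphaE_eq)
qed

lemma lim1:
  assumes u: "u \<in> {0<..<1/4}"
  shows "((\<lambda>e. alpha1E b e u) \<longlongrightarrow> a2d1 u) (at_right 0)"
proof (rule Lim_transform_eventually)
  show "((\<lambda>e. circ1 b e u) \<longlongrightarrow> a2d1 u) (at_right 0)"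
    unfolding circ1_def a2d1_def by (intro tendsto_intros arg_lim)
  show "\<forall>\<^sub>F e in at_right 0. circ1 b e u = alpha1E b e u"
    using ev_mid[OF u, of b] by eventually_elim (simp add: alpha1E_def)
qed

lemma lim2:
  assumes u: "u \<in> {0<..<1/4}"
  shows "((\<lambda>e. alpha2E b e u) \<longlongrightarrow> a2d2 u) (at_right 0)"
proof (rule Lim_transform_eventually)
  have "((\<lambda>e. circ2 b e u) \<longlongrightarrow> mk3 (cos (4*pi*u) / (1/(4*pi))) (- (sin (4*pi*u) / (1/(4*pi)))) 0) (at_right 0)"
    unfolding circ2_def by (intro tendsto_intros arg_lim lim_r) simp_all
  then show "((\<lambda>e. circ2 b e u) \<longlongrightarrow> a2d2 u) (at_right 0)"
    by (simp add: a2d2_def field_simps)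
  show "\<forall>\<^sub>F e in at_right 0. circ2 b e u = alpha2E b e u"
    using ev_mid[OF u, of b] by eventually_elim (simp add: alpha2E_def)
qed


definition Lz :: "real \<Rightarrow> vec3 \<Rightarrow> vec3" where
  "Lz sg v = mk3 (v$1) (v$2) (sg * v$3)"

lemma Lz_mk3[simp]: "Lz sg (mk3 x y z) = mk3 x y (sg * z)"
  by (simp add: Lz_def)

lemma Lz_nth[simp]: "Lz sg v $ 1 = v$1" "Lz sg v $ 2 = v$2" "Lz sg v $ 3 = sg * v$3"
  by (simp_all add: Lz_def)

lemma Lz_linear: "bounded_linear (Lz sg)"
  by (auto simp: linear_conv_bounded_linear[symmetric] intro!: linearI simp: vec3_eq_iff algebra_simps)

lemma Lz_norm: "\<bar>sg\<bar> = 1 \<Longrightarrow> norm (Lz sg v) = norm v"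
proof -
  assume s: "\<bar>sg\<bar> = 1"
  have "sg^2 = 1"
  proof -
    have "sg^2 = \<bar>sg\<bar>^2" by simp
    also have "\<dots> = 1" using s by simp
    finally show ?thesis .
  qed
  then have "(norm (Lz sg v))^2 = (norm v)^2" by (simp add: norm_vec3_sq power_mult_distrib)
  then show ?thesis by (simp add: power2_eq_iff_nonneg)
qed

lemma mk3_eq_iff: "mk3 a b c = mk3 x y z \<longleftrightarrow> a = x \<and> b = y \<and> c = z"
  by (simp add: vec3_eq_iff)

lemma Lz_alpha2: "Lz sg (alpha2 u) = alpha2 u" "Lz sg (a2d1 u) = a2d1 u" "Lz sg (a2d2 u) = a2d2 u"
  by (simp_all add: alpha2_mk3 a2d1_def a2d2_def)

lemma Lz_1: "Lz 1 v = v" by (simp add: vec3_eq_iff)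

lemma reflz_Gs: "reflz (Gs 1 \<alpha> t) = Gs 1 (\<lambda>u. Lz (-1) (\<alpha> u)) t"
proof -
  have r: "reflz v = Lz (-1) v" for v by (simp add: vec3_eq_iff)
  have c: "reflz (R1 v) = R1 (reflz v)" "reflz (R2 v) = R2 (reflz v)" "reflz (R3 v) = R3 (reflz v)" for v
    by (simp_all add: vec3_eq_iff)
  show ?thesis unfolding Gs_def Let_def by (simp add: c r[symmetric])
qed

context epsctx
begin

lemma alphaE_0: "alphaE b \<epsilon> 0 = mk3 0 0 (rhoE \<epsilon>)"
proof -
  have "phiE b \<epsilon> 0 = 0" using b3 by (simp add: phiE_def phiT_def)
  then show ?thesis using c_pos by (simp add: alphaE_eq helE_eq)
qed

lemma alphaE_q: "alphaE b \<epsilon> (1/4) = mk3 (rhoE \<epsilon> + 2 * rE b \<epsilon>) 0 0"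
  using c_pos c_small by (simp add: alphaE_eq lineE_def)

lemma alpha1E_0: "alpha1E b \<epsilon> 0 = mk3 (rhoE \<epsilon> * kap b * phiE1 b \<epsilon> 0) 1 0"
proof -
  have "phiE b \<epsilon> 0 = 0" using b3 by (simp add: phiE_def phiT_def)
  then show ?thesis using c_pos by (simp add: alpha1E_def hel1_def)
qed

lemma alpha1E_q: "alpha1E b \<epsilon> (1/4) = mk3 0 (-1) 0"
  using c_pos c_small by (simp add: alpha1E_def)

lemma W22_eps:
  assumes sg: "\<bar>sg\<bar> = 1"
  shows "W22 (Gs 1 (\<lambda>u. Lz sg (alphaE b \<epsilon> u))) (Gs (-1) (\<lambda>u. Lz sg (alpha1E b \<epsilon> u))) (Gs 1 (\<lambda>u. Lz sg (alpha2E b \<epsilon> u)))"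
proof (rule W22_Gs[where K=100 and S="{\<epsilon> * (real_of_int b - 1)/2, cE b \<epsilon>, 1/4 - cE b \<epsilon>}"])
  have cL: "continuous_on UNIV (Lz sg)" using Lz_linear by (rule linear_continuous_on)
  show "continuous_on UNIV (\<lambda>u. Lz sg (alphaE b \<epsilon> u))"
    by (rule continuous_on_compose2[OF cL cont_alphaE]) auto
  show "continuous_on UNIV (\<lambda>u. Lz sg (alpha1E b \<epsilon> u))"
    by (rule continuous_on_compose2[OF cL cont_alpha1E]) auto
  have [measurable]: "Lz sg \<in> borel_measurable borel" using cL by (rule borel_measurable_continuous_onI)
  have [measurable]: "alpha2E b \<epsilon> \<in> borel_measurable borel" by (rule meas_alpha2E)
  show "(\<lambda>u. Lz sg (alpha2E b \<epsilon> u)) \<in> borel_measurable borel" by measurable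
  show "norm (Lz sg (alphaE b \<epsilon> u)) \<le> 100 \<and> norm (Lz sg (alpha1E b \<epsilon> u)) \<le> 100 \<and> norm (Lz sg (alpha2E b \<epsilon> u)) \<le> 100"
    if "u \<in> {0..1/4}" for u
    using bnd0[OF that] bnd1[OF that] bnd2[OF that] by (simp add: Lz_norm[OF sg])
  show "((\<lambda>u. Lz sg (alphaE b \<epsilon> u)) has_vector_derivative Lz sg (alpha1E b \<epsilon> u)) (at u) \<and>
        ((\<lambda>u. Lz sg (alpha1E b \<epsilon> u)) has_vector_derivative Lz sg (alpha2E b \<epsilon> u)) (at u)"
    if "u \<in> {0<..<1/4} - {\<epsilon> * (real_of_int b - 1)/2, cE b \<epsilon>, 1/4 - cE b \<epsilon>}" for u
  proof -
    from derivs[OF that] have d1: "(alphaE b \<epsilon> has_vector_derivative alpha1E b \<epsilon> u) (at u)"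
      and d2: "(alpha1E b \<epsilon> has_vector_derivative alpha2E b \<epsilon> u) (at u)" by auto
    show ?thesis using lin_vd[OF Lz_linear d1] lin_vd[OF Lz_linear d2] by simp
  qed
qed (simp_all add: alphaE_0 alphaE_q alpha1E_0 alpha1E_q mk3_uminus)

end

lemma eventually_epsctx:
  assumes "odd b" "3 \<le> b"
  shows "\<forall>\<^sub>F e in at_right 0. epsctx b e"
  unfolding eventually_at_right_field
proof (intro exI conjI allI impI)
  show "(0::real) < 1/(8*(real_of_int b + 1))" using assms by simp
  fix e :: real assume "0 < e" "e < 1/(8*(real_of_int b + 1))"
  then show "epsctx b e" using assms by unfold_locales auto
qed

lemma main_pos:
  fixes n :: int and sg :: real
  assumes n: "odd n" "3 \<le> n" and sg: "\<bar>sg\<bar> = 1"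
  shows "(\<forall>\<^sub>F \<epsilon> in at_right 0. W22 (Gs 1 (\<lambda>u. Lz sg (alphaE n \<epsilon> u))) (Gs (-1) (\<lambda>u. Lz sg (alpha1E n \<epsilon> u))) (Gs 1 (\<lambda>u. Lz sg (alpha2E n \<epsilon> u)))) \<and>
     ((\<lambda>\<epsilon>. sqnorm01 (\<lambda>t. Gs 1 (\<lambda>u. Lz sg (alphaE n \<epsilon> u)) t - Gs 1 alpha2 t)
        + sqnorm01 (\<lambda>t. Gs (-1) (\<lambda>u. Lz sg (alpha1E n \<epsilon> u)) t - Gs (-1) a2d1 t)
        + sqnorm01 (\<lambda>t. Gs 1 (\<lambda>u. Lz sg (alpha2E n \<epsilon> u)) t - Gs 1 a2d2 t)) \<longlongrightarrow> 0) (at_right 0)"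
proof
  have ev: "\<forall>\<^sub>F e in at_right 0. epsctx n e" by (rule eventually_epsctx[OF n])
  show "\<forall>\<^sub>F \<epsilon> in at_right 0. W22 (Gs 1 (\<lambda>u. Lz sg (alphaE n \<epsilon> u))) (Gs (-1) (\<lambda>u. Lz sg (alpha1E n \<epsilon> u))) (Gs 1 (\<lambda>u. Lz sg (alpha2E n \<epsilon> u)))"
    using ev by eventually_elim (rule epsctx.W22_eps[OF _ sg])
  have cL: "continuous_on UNIV (Lz sg)" using Lz_linear by (rule linear_continuous_on)
  have mL: "Lz sg \<in> borel_measurable borel" using cL by (rule borel_measurable_continuous_onI)
  have iL: "isCont (Lz sg) x" for x using Lz_linear by (rule linear_continuous_at)
  have L: "((\<lambda>e. Lz sg (f e)) \<longlongrightarrow> Lz sg l) F" if "(f \<longlongrightarrow> l) F" for f l and F :: "real filter"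
    by (rule isCont_tendsto_compose[OF iL that])
  have ma: "alpha2 \<in> borel_measurable borel" "a2d1 \<in> borel_measurable borel" "a2d2 \<in> borel_measurable borel"
    using alpha2_cont by (auto intro: borel_measurable_continuous_onI)
  have c0: "((\<lambda>\<epsilon>. sqnorm01 (\<lambda>t. Gs 1 (\<lambda>u. Lz sg (alphaE n \<epsilon> u)) t - Gs 1 alpha2 t)) \<longlongrightarrow> 0) (at_right 0)"
  proof (rule conv_Gs[where K=100])
    show "((\<lambda>e. Lz sg (alphaE n e u)) \<longlongrightarrow> alpha2 u) (at_right 0)" if "u \<in> {0<..<1/4}" for u
      using L[OF lim0[OF that, of n]] by (simp add: Lz_alpha2)
    show "\<forall>\<^sub>F e in at_right 0. (\<lambda>u. Lz sg (alphaE n e u)) \<in> borel_measurable borel \<and> (\<forall>u\<in>{0..1/4}. norm (Lz sg (alphaE n e u)) \<le> 100)"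
      using ev
    proof eventually_elim
      case (elim e)
      have "(\<lambda>u. Lz sg (alphaE n e u)) \<in> borel_measurable borel"
        using measurable_compose[OF borel_measurable_continuous_onI[OF epsctx.cont_alphaE[OF elim]] mL] by (simp add: o_def)
      then show ?case using epsctx.bnd0[OF elim] by (simp add: Lz_norm[OF sg])
    qed
  qed (use ma alpha2_bounds in auto)
  have c1: "((\<lambda>\<epsilon>. sqnorm01 (\<lambda>t. Gs (-1) (\<lambda>u. Lz sg (alpha1E n \<epsilon> u)) t - Gs (-1) a2d1 t)) \<longlongrightarrow> 0) (at_right 0)"
  proof (rule conv_Gs[where K=100])
    show "((\<lambda>e. Lz sg (alpha1E n e u)) \<longlongrightarrow> a2d1 u) (at_right 0)" if "u \<in> {0<..<1/4}" for u
      using L[OF lim1[OF that, of n]] by (simp add: Lz_alpha2)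
    show "\<forall>\<^sub>F e in at_right 0. (\<lambda>u. Lz sg (alpha1E n e u)) \<in> borel_measurable borel \<and> (\<forall>u\<in>{0..1/4}. norm (Lz sg (alpha1E n e u)) \<le> 100)"
      using ev
    proof eventually_elim
      case (elim e)
      have "(\<lambda>u. Lz sg (alpha1E n e u)) \<in> borel_measurable borel"
        using measurable_compose[OF borel_measurable_continuous_onI[OF epsctx.cont_alpha1E[OF elim]] mL] by (simp add: o_def)
      then show ?case using epsctx.bnd1[OF elim] by (simp add: Lz_norm[OF sg])
    qed
  qed (use ma alpha2_bounds in auto)
  have c2: "((\<lambda>\<epsilon>. sqnorm01 (\<lambda>t. Gs 1 (\<lambda>u. Lz sg (alpha2E n \<epsilon> u)) t - Gs 1 a2d2 t)) \<longlongrightarrow> 0) (at_right 0)"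
  proof (rule conv_Gs[where K=100])
    show "((\<lambda>e. Lz sg (alpha2E n e u)) \<longlongrightarrow> a2d2 u) (at_right 0)" if "u \<in> {0<..<1/4}" for u
      using L[OF lim2[OF that, of n]] by (simp add: Lz_alpha2)
    show "\<forall>\<^sub>F e in at_right 0. (\<lambda>u. Lz sg (alpha2E n e u)) \<in> borel_measurable borel \<and> (\<forall>u\<in>{0..1/4}. norm (Lz sg (alpha2E n e u)) \<le> 100)"
      using ev
    proof eventually_elim
      case (elim e)
      have "(\<lambda>u. Lz sg (alpha2E n e u)) \<in> borel_measurable borel"
        using measurable_compose[OF epsctx.meas_alpha2E[OF elim] mL] by (simp add: o_def)
      then show ?case using epsctx.bnd2[OF elim] by (simp add: Lz_norm[OF sg])
    qed
  qed (use ma alpha2_bounds in auto)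
  show "((\<lambda>\<epsilon>. sqnorm01 (\<lambda>t. Gs 1 (\<lambda>u. Lz sg (alphaE n \<epsilon> u)) t - Gs 1 alpha2 t)
        + sqnorm01 (\<lambda>t. Gs (-1) (\<lambda>u. Lz sg (alpha1E n \<epsilon> u)) t - Gs (-1) a2d1 t)
        + sqnorm01 (\<lambda>t. Gs 1 (\<lambda>u. Lz sg (alpha2E n \<epsilon> u)) t - Gs 1 a2d2 t)) \<longlongrightarrow> 0) (at_right 0)"
    using tendsto_add[OF tendsto_add[OF c0 c1] c2] by simp
qed

theorem lemma5p1:
  fixes b :: int
  assumes "odd b" and "b \<noteq> 1" and "b \<noteq> -1"
  shows "\<exists>G1 G2 T1 T2. W22 tpc_pi T1 T2 \<and>
     (\<forall>\<^sub>F \<epsilon> in at_right 0. W22 (gE b \<epsilon>) (G1 \<epsilon>) (G2 \<epsilon>)) \<and>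
     ((\<lambda>\<epsilon>. sqnorm01 (\<lambda>t. gE b \<epsilon> t - tpc_pi t) + sqnorm01 (\<lambda>t. G1 \<epsilon> t - T1 t)
            + sqnorm01 (\<lambda>t. G2 \<epsilon> t - T2 t)) \<longlongrightarrow> 0) (at_right 0)"
proof -
  define n where "n = \<bar>b\<bar>"
  define sg :: real where "sg = (if 0 \<le> b then 1 else -1)"
  have n: "odd n" "3 \<le> n"
  proof -
    show "odd n" using assms(1) unfolding n_def by simp
    have "b \<noteq> 0" using assms(1) by auto
    moreover have "\<bar>b\<bar> \<noteq> 1" using assms(2,3) by auto
    moreover have "\<bar>b\<bar> \<noteq> 2"
    proof
      assume "\<bar>b\<bar> = 2"
      then have "b = 2 \<or> b = -2" by auto
      then show False using assms(1) by auto
    qed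
    ultimately show "3 \<le> n" unfolding n_def by linarith
  qed
  have sg: "\<bar>sg\<bar> = 1" unfolding sg_def by simp
  have gE: "gE b \<epsilon> = Gs 1 (\<lambda>u. Lz sg (alphaE n \<epsilon> u))" for \<epsilon>
  proof (cases "0 \<le> b")
    case True
    then show ?thesis by (simp add: gE_def sg_def n_def Gsym_Gs Lz_1)
  next
    case False
    then show ?thesis by (simp add: gE_def sg_def n_def Gsym_Gs reflz_Gs fun_eq_iff)
  qed
  have tpc: "tpc_pi = Gs 1 alpha2" by (simp add: tpc_pi_def Gsym_Gs)
  show ?thesis
    apply (rule exI[of _ "\<lambda>\<epsilon>. Gs (-1) (\<lambda>u. Lz sg (alpha1E n \<epsilon> u))"])
    apply (rule exI[of _ "\<lambda>\<epsilon>. Gs 1 (\<lambda>u. Lz sg (alpha2E n \<epsilon> u))"])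
    apply (rule exI[of _ "Gs (-1) a2d1"])
    apply (rule exI[of _ "Gs 1 a2d2"])
    using W22_tpc main_pos[OF n sg] unfolding gE tpc by auto
qed

end
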